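(* Let $H_0$ be an admissible Hamiltonian with vector field $f$, let $g=J\nabla K_0$ be associated to $f$ via $B$ (so $\nabla K_0=B\nabla H_0$), and let $\widetilde H_0(x,\varepsilon)=x^T\mathcal H\big(I-\varepsilon^2(J(x)\mathcal H)^2\big)^{-1}x$ and $\widetilde K_0(x,\varepsilon)=x^T\mathcal K\big(I-\varepsilon^2(J(x)\mathcal K)^2\big)^{-1}x$, where $\mathcal H=\nabla^2H_0$, $\mathcal K=\nabla^2K_0=B\mathcal H$. Then $$\nabla_x\widetilde K_0(x,\varepsilon)=B\,\nabla_x\widetilde H_0(x,\varepsilon),$$ and consequently $A\,\nabla_x^2\widetilde H_0(x,\varepsilon)=\nabla_x^2\widetilde H_0(x,\varepsilon)\,A^T$ and $A\,\nabla_x^2\widetilde K_0(x,\varepsilon)=\nabla_x^2\widetilde K_0(x,\varepsilon)\,A^T$ wherever defined.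
   Context: Fix an integer $n\ge 2$. Points of $\mathbb R^{2n}$ are $x=(x_1,\dots,x_{2n})^{T}$; write $u=(x_1,\dots,x_n)^T$. Let $X(u)$ be the $n\times n$ matrix with entries $X(u)_{ij}=x_{k}$ where $k\in\{1,\dots,n\}$, $k\equiv i+j-1 \pmod n$, and let $J(x)=\begin{pmatrix}0&X(u)\\-X(u)&0\end{pmatrix}$ (a skew-symmetric $2n\times 2n$ matrix depending linearly on $x$). Let $\mathcal P$ be the $n\times n$ cyclic shift matrix ($\mathcal P_{i,i+1}=1$ for $1\le i\le n-1$, $\mathcal P_{n,1}=1$, all other entries $0$) and $A=\begin{pmatrix}\mathcal P&0\\0&\mathcal P\end{pmatrix}$. An admissible Hamiltonian is a homogeneous quadratic form $H(x)=\tfrac12 x^T\mathcal H x$ with a constant symmetric matrix $\mathcal H=\nabla^2H$ satisfying $A\mathcal H=\mathcal H A^T$; its Hamiltonian vector field is $f(x)=J(x)\nabla H(x)$. Associated vector fields: let $B=\sum_{i=0}^{n-1}\alpha_iA^i$ with $\alpha_i\in\mathbb C$ and $B^2=I$. If $H$ is an admissible Hamiltonian with vector field $f$, put $K(x)=\tfrac12 x^T B\mathcal H x$ (so $\nabla K=B\nabla H$) and $g(x)=J(x)\nabla K(x)=B^Tf(x)$; $g$ is said to be associated to $f$ via $B$. (When $B$ is complex, everything is considered over $\mathbb C^{2n}$.) The functions $\widetilde H_0,\widetilde K_0$ in the claim coincide with the conserved quantities $(2\varepsilon)^{-1}x^TJ(\frac{x+\tilde x}{2})^{-1}\tilde x$,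 $\tilde x=\Phi_f(x,\varepsilon)$ (resp. with $g$) of the Kahan maps $\Phi_f(x,\varepsilon)=(I-\varepsilon f'(x))^{-1}x$, $\Phi_g$. *)

theory Defs
  imports "Jordan_Normal_Form.Gauss_Jordan_Elimination" "Jordan_Normal_Form.Determinant"
begin

text \<open>All indices are 0-based: coordinates x_0 .. x_{2n-1} (paper: x_1 .. x_{2n}).
  Vectors/matrices are Jordan_Normal_Form vec/mat over the complex numbers.\<close>

text \<open>X(u)_{ij} = x_k with k = (i+j) mod n (0-based version of k = i+j-1 mod n).\<close>
definition Xmat :: "nat \<Rightarrow> complex vec \<Rightarrow> complex mat" where
  "Xmat n x = mat n n (\<lambda>(i,j). x $ ((i + j) mod n))"

definition Jmat :: "nat \<Rightarrow> complex vec \<Rightarrow> complex mat" where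
  "Jmat n x = mat (2*n) (2*n) (\<lambda>(i,j).
      if i < n \<and> n \<le> j then Xmat n x $$ (i, j - n)
      else if n \<le> i \<and> j < n then - (Xmat n x $$ (i - n, j))
      else 0)"

text \<open>Cyclic shift: P_{i,i+1} = 1, P_{n,1} = 1 (1-based); 0-based: P_{i,(i+1) mod n} = 1.\<close>
definition Pmat :: "nat \<Rightarrow> complex mat" where
  "Pmat n = mat n n (\<lambda>(i,j). if j = (i + 1) mod n then 1 else 0)"

definition Amat :: "nat \<Rightarrow> complex mat" where
  "Amat n = mat (2*n) (2*n) (\<lambda>(i,j).
      if i < n \<and> j < n then Pmat n $$ (i, j)
      else if n \<le> i \<and> n \<le> j then Pmat n $$ (i - n, j - n)
      else 0)"

text \<open>B = sum_{i=0}^{n-1} alpha_i A^i (entrywise, since JNF matrices have no additive monoid instance).\<close>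
definition Bmat :: "nat \<Rightarrow> (nat \<Rightarrow> complex) \<Rightarrow> complex mat" where
  "Bmat n \<alpha> = mat (2*n) (2*n) (\<lambda>(i,j). \<Sum>k<n. \<alpha> k * (Amat n ^\<^sub>m k) $$ (i,j))"

definition admissible :: "nat \<Rightarrow> real mat \<Rightarrow> bool" where
  "admissible n Hr \<longleftrightarrow> Hr \<in> carrier_mat (2*n) (2*n) \<and> Hr\<^sup>T = Hr \<and>
     Amat n * map_mat complex_of_real Hr = map_mat complex_of_real Hr * (Amat n)\<^sup>T"

text \<open>Matrix inverse (via Gauss-Jordan; meaningful when det M \<noteq> 0).\<close>
definition minv :: "complex mat \<Rightarrow> complex mat" where
  "minv M = the (mat_inverse M)"

definition Dmat :: "nat \<Rightarrow> complex mat \<Rightarrow> complex vec \<Rightarrow> real \<Rightarrow> complex mat" where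
  "Dmat n M x e = 1\<^sub>m (2*n) - (complex_of_real e)^2 \<cdot>\<^sub>m ((Jmat n x * M) * (Jmat n x * M))"

definition modH :: "nat \<Rightarrow> complex mat \<Rightarrow> complex vec \<Rightarrow> real \<Rightarrow> complex" where
  "modH n M x e = x \<bullet> ((M * minv (Dmat n M x e)) *\<^sub>v x)"

text \<open>Complex derivative (same definition as deriv in HOL-Analysis, which cannot be
  imported together with Jordan_Normal_Form because of a type-name clash).\<close>
definition cderiv :: "(complex \<Rightarrow> complex) \<Rightarrow> complex \<Rightarrow> complex" where
  "cderiv f z = (SOME D. (f has_field_derivative D) (at z))"

definition grad :: "nat \<Rightarrow> (complex vec \<Rightarrow> complex) \<Rightarrow> complex vec \<Rightarrow> complex vec" where
  "grad n F x = vec (2*n) (\<lambda>j. cderiv (\<lambda>t. F (x + t \<cdot>\<^sub>v unit_vec (2*n) j)) 0)"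

definition hess :: "nat \<Rightarrow> (complex vec \<Rightarrow> complex) \<Rightarrow> complex vec \<Rightarrow> complex mat" where
  "hess n F x = mat (2*n) (2*n)
      (\<lambda>(i,j). cderiv (\<lambda>s. grad n F (x + s \<cdot>\<^sub>v unit_vec (2*n) i) $ j) 0)"


end

theory Submission imports Defs begin

section \<open>Scalar differentiability at 0\<close>

definition dif :: "(complex \<Rightarrow> complex) \<Rightarrow> bool" where
  "dif f \<longleftrightarrow> (\<exists>D. (f has_field_derivative D) (at 0))"

lemma dif_const: "dif (\<lambda>s. c)" unfolding dif_def by (auto intro!: derivative_eq_intros)

lemma dif_add: "dif f \<Longrightarrow> dif g \<Longrightarrow> dif (\<lambda>s. f s + g s)"
  unfolding dif_def by (auto intro!: derivative_eq_intros)

lemma dif_mult: "dif f \<Longrightarrow> dif g \<Longrightarrow> dif (\<lambda>s. f s * g s)"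
  unfolding dif_def by (auto intro!: derivative_eq_intros)

lemma dif_inverse: "dif f \<Longrightarrow> f 0 \<noteq> 0 \<Longrightarrow> dif (\<lambda>s. inverse (f s))"
  unfolding dif_def by (auto intro!: derivative_eq_intros)

lemma dif_sum: "(\<And>x. x \<in> S \<Longrightarrow> dif (\<lambda>s. f s x)) \<Longrightarrow> dif (\<lambda>s. \<Sum>x\<in>S. f s x)"
proof -
  assume "\<And>x. x \<in> S \<Longrightarrow> dif (\<lambda>s. f s x)"
  then obtain D where "\<And>x. x \<in> S \<Longrightarrow> ((\<lambda>s. f s x) has_field_derivative D x) (at 0)"
    unfolding dif_def by metis
  then show ?thesis unfolding dif_def by (blast intro: DERIV_sum)
qed

lemma dif_prod: "(\<And>x. x \<in> S \<Longrightarrow> dif (\<lambda>s. f s x)) \<Longrightarrow> dif (\<lambda>s. \<Prod>x\<in>S. f s x)"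
proof -
  assume "\<And>x. x \<in> S \<Longrightarrow> dif (\<lambda>s. f s x)"
  then obtain D where "\<And>x. x \<in> S \<Longrightarrow> ((\<lambda>s. f s x) has_field_derivative D x) (at 0)"
    unfolding dif_def by metis
  then show ?thesis unfolding dif_def using has_field_derivative_prod[of S "\<lambda>x s. f s x" D 0] by blast
qed

lemma dif_cong: "dif f \<Longrightarrow> (\<forall>\<^sub>F s in nhds 0. f s = g s) \<Longrightarrow> dif g"
  unfolding dif_def using DERIV_cong_ev by blast

lemma dif_ev_ne: assumes "dif f" "f 0 \<noteq> 0" shows "\<forall>\<^sub>F s in nhds 0. f s \<noteq> 0"
proof -
  from assms obtain D where "(f has_field_derivative D) (at 0)" unfolding dif_def by auto
  hence "isCont f 0" by (rule DERIV_isCont)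
  hence "(f \<longlongrightarrow> f 0) (nhds 0)" by (simp add: isCont_def tendsto_at_iff_tendsto_nhds)
  thus ?thesis using assms(2) tendsto_imp_eventually_ne by blast
qed

section \<open>Matrix differentiability at 0\<close>

definition mhd :: "nat \<Rightarrow> nat \<Rightarrow> (complex \<Rightarrow> complex mat) \<Rightarrow> complex mat \<Rightarrow> bool" where
  "mhd m k f F \<longleftrightarrow> F \<in> carrier_mat m k \<and> (\<forall>\<^sub>F s in nhds 0. f s \<in> carrier_mat m k) \<and>
     (\<forall>i<m. \<forall>j<k. ((\<lambda>s. f s $$ (i,j)) has_field_derivative F $$ (i,j)) (at 0))"

lemma mhd_carrier: "mhd m k f F \<Longrightarrow> f 0 \<in> carrier_mat m k" "mhd m k f F \<Longrightarrow> F \<in> carrier_mat m k"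
  unfolding mhd_def using eventually_nhds_x_imp_x by blast+

lemma mhd_ev: "mhd m k f F \<Longrightarrow> \<forall>\<^sub>F s in nhds 0. f s \<in> carrier_mat m k"
  unfolding mhd_def by blast

lemma mhd_D: "mhd m k f F \<Longrightarrow> i < m \<Longrightarrow> j < k \<Longrightarrow> ((\<lambda>s. f s $$ (i,j)) has_field_derivative F $$ (i,j)) (at 0)"
  unfolding mhd_def by blast

lemma mhd_dif: "mhd m k f F \<Longrightarrow> i < m \<Longrightarrow> j < k \<Longrightarrow> dif (\<lambda>s. f s $$ (i,j))"
  unfolding dif_def using mhd_D by blast

lemma mhd_const: "C \<in> carrier_mat m k \<Longrightarrow> mhd m k (\<lambda>s. C) (0\<^sub>m m k)"
  unfolding mhd_def by (auto intro!: derivative_eq_intros)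

lemma mhd_cong: assumes "mhd m k f F" "\<forall>\<^sub>F s in nhds 0. f s = g s" shows "mhd m k g F"
  unfolding mhd_def
proof (intro conjI allI impI)
  show "F \<in> carrier_mat m k" using mhd_carrier[OF assms(1)] by auto
  show "\<forall>\<^sub>F s in nhds 0. g s \<in> carrier_mat m k" using mhd_ev[OF assms(1)] assms(2)
    by eventually_elim auto
  fix i j assume "i < m" "j < k"
  from mhd_D[OF assms(1) this] show "((\<lambda>s. g s $$ (i, j)) has_field_derivative F $$ (i, j)) (at 0)"
    using DERIV_cong_ev[of 0 0 "\<lambda>s. f s $$ (i,j)" "\<lambda>s. g s $$ (i,j)"] assms(2)
    by (smt (verit, best) eventually_mono)
qed

lemma mhd_add: assumes "mhd m k f F" "mhd m k g G" shows "mhd m k (\<lambda>s. f s + g s) (F + G)"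
  unfolding mhd_def
proof (intro conjI allI impI)
  show "F + G \<in> carrier_mat m k" using mhd_carrier assms by auto
  show ev: "\<forall>\<^sub>F s in nhds 0. f s + g s \<in> carrier_mat m k" using mhd_ev[OF assms(1)] mhd_ev[OF assms(2)]
    by eventually_elim auto
  fix i j assume ij: "i < m" "j < k"
  have "((\<lambda>s. f s $$ (i,j) + g s $$ (i,j)) has_field_derivative F $$ (i,j) + G $$ (i,j)) (at 0)"
    using mhd_D[OF assms(1) ij] mhd_D[OF assms(2) ij] by (auto intro!: derivative_eq_intros)
  moreover have "\<forall>\<^sub>F s in nhds 0. f s $$ (i,j) + g s $$ (i,j) = (f s + g s) $$ (i,j)"
    using mhd_ev[OF assms(1)] mhd_ev[OF assms(2)] by eventually_elim (use ij in auto)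
  ultimately show "((\<lambda>s. (f s + g s) $$ (i, j)) has_field_derivative (F + G) $$ (i, j)) (at 0)"
    using DERIV_cong_ev[of 0 0] mhd_carrier[OF assms(1)] mhd_carrier[OF assms(2)] ij by fastforce
qed

lemma mhd_diff: assumes "mhd m k f F" "mhd m k g G" shows "mhd m k (\<lambda>s. f s - g s) (F - G)"
  unfolding mhd_def
proof (intro conjI allI impI)
  show "F - G \<in> carrier_mat m k" using mhd_carrier(2)[OF assms(2)] by (rule minus_carrier_mat)
  show ev: "\<forall>\<^sub>F s in nhds 0. f s - g s \<in> carrier_mat m k" using mhd_ev[OF assms(1)] mhd_ev[OF assms(2)]
    by eventually_elim auto
  fix i j assume ij: "i < m" "j < k"
  have "((\<lambda>s. f s $$ (i,j) - g s $$ (i,j)) has_field_derivative F $$ (i,j) - G $$ (i,j)) (at 0)"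
    using mhd_D[OF assms(1) ij] mhd_D[OF assms(2) ij] by (auto intro!: derivative_eq_intros)
  moreover have "\<forall>\<^sub>F s in nhds 0. f s $$ (i,j) - g s $$ (i,j) = (f s - g s) $$ (i,j)"
    using mhd_ev[OF assms(1)] mhd_ev[OF assms(2)] by eventually_elim (use ij in auto)
  ultimately show "((\<lambda>s. (f s - g s) $$ (i, j)) has_field_derivative (F - G) $$ (i, j)) (at 0)"
    using DERIV_cong_ev[of 0 0] mhd_carrier[OF assms(1)] mhd_carrier[OF assms(2)] ij by fastforce
qed

lemma mhd_smult: assumes "mhd m k f F" shows "mhd m k (\<lambda>s. c \<cdot>\<^sub>m f s) (c \<cdot>\<^sub>m F)"
  unfolding mhd_def
proof (intro conjI allI impI)
  show "c \<cdot>\<^sub>m F \<in> carrier_mat m k" using mhd_carrier assms by auto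
  show ev: "\<forall>\<^sub>F s in nhds 0. c \<cdot>\<^sub>m f s \<in> carrier_mat m k" using mhd_ev[OF assms(1)]
    by eventually_elim auto
  fix i j assume ij: "i < m" "j < k"
  have "((\<lambda>s. c * f s $$ (i,j)) has_field_derivative c * F $$ (i,j)) (at 0)"
    using mhd_D[OF assms(1) ij] by (auto intro!: derivative_eq_intros)
  moreover have "\<forall>\<^sub>F s in nhds 0. c * f s $$ (i,j) = (c \<cdot>\<^sub>m f s) $$ (i,j)"
    using mhd_ev[OF assms(1)] by eventually_elim (use ij in auto)
  ultimately show "((\<lambda>s. (c \<cdot>\<^sub>m f s) $$ (i, j)) has_field_derivative (c \<cdot>\<^sub>m F) $$ (i, j)) (at 0)"
    using DERIV_cong_ev[of 0 0] mhd_carrier[OF assms(1)] ij by fastforce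
qed

lemma mhd_mult: assumes "mhd m k f F" "mhd k l g G"
  shows "mhd m l (\<lambda>s. f s * g s) (F * g 0 + f 0 * G)"
  unfolding mhd_def
proof (intro conjI allI impI)
  note c = mhd_carrier[OF assms(1)] mhd_carrier[OF assms(2)]
  show "F * g 0 + f 0 * G \<in> carrier_mat m l" using c by auto
  show ev: "\<forall>\<^sub>F s in nhds 0. f s * g s \<in> carrier_mat m l" using mhd_ev[OF assms(1)] mhd_ev[OF assms(2)]
    by eventually_elim auto
  fix i j assume ij: "i < m" "j < l"
  have "((\<lambda>s. \<Sum>r\<in>{0..<k}. f s $$ (i,r) * g s $$ (r,j)) has_field_derivative
     (\<Sum>r\<in>{0..<k}. F $$ (i,r) * g 0 $$ (r,j) + f 0 $$ (i,r) * G $$ (r,j))) (at 0)"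
    using mhd_D[OF assms(1)] mhd_D[OF assms(2)] ij by (auto intro!: derivative_eq_intros sum.cong simp: mult.commute)
  moreover have "\<forall>\<^sub>F s in nhds 0. (\<Sum>r\<in>{0..<k}. f s $$ (i,r) * g s $$ (r,j)) = (f s * g s) $$ (i,j)"
    using mhd_ev[OF assms(1)] mhd_ev[OF assms(2)] by eventually_elim (use ij in \<open>auto simp: scalar_prod_def\<close>)
  moreover have "(\<Sum>r\<in>{0..<k}. F $$ (i,r) * g 0 $$ (r,j) + f 0 $$ (i,r) * G $$ (r,j)) = (F * g 0 + f 0 * G) $$ (i,j)"
    using c ij by (auto simp: scalar_prod_def sum.distrib intro!: sum.cong)
  ultimately show "((\<lambda>s. (f s * g s) $$ (i, j)) has_field_derivative (F * g 0 + f 0 * G) $$ (i, j)) (at 0)"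
    using DERIV_cong_ev[of 0 0] by fastforce
qed

lemma mhd_unique: assumes "mhd m k f F" "mhd m k g G" "\<forall>\<^sub>F s in nhds 0. f s = g s" shows "F = G"
proof (rule eq_matI)
  note c = mhd_carrier[OF assms(1)] mhd_carrier[OF assms(2)]
  fix i j assume ij: "i < dim_row G" "j < dim_col G"
  hence ij': "i < m" "j < k" using c by auto
  have "((\<lambda>s. g s $$ (i,j)) has_field_derivative F $$ (i,j)) (at 0)"
    using mhd_D[OF assms(1) ij'] DERIV_cong_ev[of 0 0 "\<lambda>s. f s $$ (i,j)" "\<lambda>s. g s $$ (i,j)"] assms(3)
    by (smt (verit, best) eventually_mono)
  thus "F $$ (i,j) = G $$ (i,j)" using mhd_D[OF assms(2) ij'] DERIV_unique by blast
qed (use mhd_carrier[OF assms(1)] mhd_carrier[OF assms(2)] in auto)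

section \<open>Determinant, adjugate, inverse\<close>

lemma dif_det: assumes ev: "\<forall>\<^sub>F s in nhds 0. f s \<in> carrier_mat m m"
  and d: "\<And>i j. i < m \<Longrightarrow> j < m \<Longrightarrow> dif (\<lambda>s. f s $$ (i,j))"
  shows "dif (\<lambda>s. det (f s))"
proof -
  have "dif (\<lambda>s. \<Sum>p\<in>{p. p permutes {0..<m}}. signof p * (\<Prod>i = 0..<m. f s $$ (i, p i)))"
  proof (rule dif_sum)
    fix p assume "p \<in> {p. p permutes {0..<m}}"
    hence "\<And>i. i < m \<Longrightarrow> p i < m" using permutes_in_image by fastforce
    thus "dif (\<lambda>s. signof p * (\<Prod>i = 0..<m. f s $$ (i, p i)))"
      by (intro dif_mult dif_const dif_prod d) auto
  qed
  moreover have "\<forall>\<^sub>F s in nhds 0. (\<Sum>p\<in>{p. p permutes {0..<m}}. signof p * (\<Prod>i = 0..<m. f s $$ (i, p i))) = det (f s)"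
    using ev by eventually_elim (simp add: det_def')
  ultimately show ?thesis by (rule dif_cong)
qed

lemma dif_adj: assumes ev: "\<forall>\<^sub>F s in nhds 0. f s \<in> carrier_mat m m"
  and d: "\<And>i j. i < m \<Longrightarrow> j < m \<Longrightarrow> dif (\<lambda>s. f s $$ (i,j))"
  and ij: "i < m" "j < m"
  shows "dif (\<lambda>s. adj_mat (f s) $$ (i,j))"
proof -
  have "dif (\<lambda>s. det (mat_delete (f s) j i))"
  proof (rule dif_det)
    show "\<forall>\<^sub>F s in nhds 0. mat_delete (f s) j i \<in> carrier_mat (m-1) (m-1)"
      using ev by eventually_elim (rule mat_delete_carrier)
    fix a b assume ab: "a < m - 1" "b < m - 1"
    have "dif (\<lambda>s. f s $$ (if a < j then a else Suc a, if b < i then b else Suc b))"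
      using ab by (intro d) auto
    moreover have "\<forall>\<^sub>F s in nhds 0. f s $$ (if a < j then a else Suc a, if b < i then b else Suc b)
        = mat_delete (f s) j i $$ (a,b)"
      using ev by eventually_elim (use ab in \<open>auto simp: mat_delete_def\<close>)
    ultimately show "dif (\<lambda>s. mat_delete (f s) j i $$ (a, b))" by (rule dif_cong)
  qed
  hence "dif (\<lambda>s. (-1)^(j+i) * det (mat_delete (f s) j i))" by (intro dif_mult dif_const)
  moreover have "\<forall>\<^sub>F s in nhds 0. (-1)^(j+i) * det (mat_delete (f s) j i) = adj_mat (f s) $$ (i,j)"
    using ev by eventually_elim (use ij in \<open>auto simp: adj_mat_def cofactor_def\<close>)
  ultimately show ?thesis by (rule dif_cong)
qed

lemma minv: assumes A: "A \<in> carrier_mat m m" and d: "det A \<noteq> 0"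
  shows "minv A \<in> carrier_mat m m" "A * minv A = 1\<^sub>m m" "minv A * A = 1\<^sub>m m"
proof -
  have "A \<in> Units (ring_mat TYPE(complex) m m)" using det_non_zero_imp_unit[OF A d] .
  hence "mat_inverse A \<noteq> None" using mat_inverse(1)[OF A, where b=m] by blast
  then obtain B where B: "mat_inverse A = Some B" by auto
  from mat_inverse(2)[OF A B] B show "minv A \<in> carrier_mat m m" "A * minv A = 1\<^sub>m m" "minv A * A = 1\<^sub>m m"
    unfolding minv_def by auto
qed

lemma minv_adj: assumes A: "A \<in> carrier_mat m m" and d: "det A \<noteq> 0"
  shows "minv A = inverse (det A) \<cdot>\<^sub>m adj_mat A"
proof -
  note m = minv[OF A d] and a = adj_mat[OF A]
  have "adj_mat A = adj_mat A * (A * minv A)" using m a by simp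
  also have "\<dots> = (adj_mat A * A) * minv A" by (rule assoc_mult_mat[symmetric, of _ m m _ m _ m]) (use m a A in auto)
  also have "\<dots> = (det A \<cdot>\<^sub>m 1\<^sub>m m) * minv A" by (subst a(3)) simp
  also have "\<dots> = det A \<cdot>\<^sub>m minv A" using mult_smult_assoc_mat[of "1\<^sub>m m" m m "minv A" m "det A"] m by simp
  finally show ?thesis using d m by (auto intro!: eq_matI)
qed

lemma minv_index: assumes A: "A \<in> carrier_mat m m" and d: "det A \<noteq> 0" and ij: "i < m" "j < m"
  shows "minv A $$ (i,j) = inverse (det A) * adj_mat A $$ (i,j)"
proof -
  have "adj_mat A \<in> carrier_mat m m" using adj_mat[OF A] by auto
  thus ?thesis using minv_adj[OF A d] ij by simp
qed

lemma add_eq_0_mat: assumes X: "X \<in> carrier_mat m k" and Y: "Y \<in> carrier_mat m k" and e: "X + Y = 0\<^sub>m m k"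
  shows "Y = - (X :: complex mat)"
proof (rule eq_matI)
  fix i j assume ij: "i < dim_row (- X)" "j < dim_col (- X)"
  have "(X + Y) $$ (i,j) = 0" using e ij X by simp
  thus "Y $$ (i,j) = (- X) $$ (i,j)" using ij X Y by (simp add: add_eq_0_iff)
qed (use X Y in auto)

lemma mhd_inv: assumes f: "mhd m m f F" and d: "det (f 0) \<noteq> 0"
  shows "mhd m m (\<lambda>s. minv (f s)) (- (minv (f 0) * F * minv (f 0)))"
proof -
  note ev = mhd_ev[OF f]
  have de: "\<And>i j. i < m \<Longrightarrow> j < m \<Longrightarrow> dif (\<lambda>s. f s $$ (i,j))" using mhd_dif[OF f] by auto
  have "dif (\<lambda>s. det (f s))" by (rule dif_det[OF ev de])
  from dif_ev_ne[OF this d] have evd: "\<forall>\<^sub>F s in nhds 0. det (f s) \<noteq> 0" .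
  have ri: "dif (\<lambda>s. minv (f s) $$ (i,j))" if ij: "i < m" "j < m" for i j
  proof -
    have "dif (\<lambda>s. inverse (det (f s)) * adj_mat (f s) $$ (i,j))"
      by (intro dif_mult dif_inverse dif_det[OF ev de] dif_adj[OF ev de ij] d)
    moreover have "\<forall>\<^sub>F s in nhds 0. inverse (det (f s)) * adj_mat (f s) $$ (i,j) = minv (f s) $$ (i,j)"
      using ev evd by eventually_elim (use ij in \<open>simp add: minv_index\<close>)
    ultimately show ?thesis by (rule dif_cong)
  qed
  define R' where "R' = mat m m (\<lambda>(i,j). SOME D. ((\<lambda>s. minv (f s) $$ (i,j)) has_field_derivative D) (at 0))"
  have r: "mhd m m (\<lambda>s. minv (f s)) R'" unfolding mhd_def
  proof (intro conjI allI impI)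
    show "R' \<in> carrier_mat m m" unfolding R'_def by simp
    show "\<forall>\<^sub>F s in nhds 0. minv (f s) \<in> carrier_mat m m" using ev evd by eventually_elim (rule minv)
    fix i j assume ij: "i < m" "j < m"
    from ri[OF ij] show "((\<lambda>s. minv (f s) $$ (i, j)) has_field_derivative R' $$ (i, j)) (at 0)"
      unfolding R'_def dif_def using ij by (auto intro: someI_ex)
  qed
  have f0: "f 0 \<in> carrier_mat m m" and F: "F \<in> carrier_mat m m" using mhd_carrier[OF f] by auto
  note m0 = minv[OF f0 d]
  have R': "R' \<in> carrier_mat m m" using mhd_carrier[OF r] by auto
  have "F * minv (f 0) + f 0 * R' = 0\<^sub>m m m"
  proof (rule mhd_unique[OF mhd_mult[OF f r] mhd_const])
    show "1\<^sub>m m \<in> carrier_mat m m" by simp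
    show "\<forall>\<^sub>F s in nhds 0. f s * minv (f s) = 1\<^sub>m m" using ev evd by eventually_elim (rule minv)
  qed
  hence "minv (f 0) * (F * minv (f 0) + f 0 * R') = 0\<^sub>m m m" using m0 by simp
  moreover have "minv (f 0) * (F * minv (f 0) + f 0 * R') = minv (f 0) * (F * minv (f 0)) + minv (f 0) * (f 0 * R')"
    by (rule mult_add_distrib_mat[of _ m m]) (use m0 F R' f0 in auto)
  moreover have "minv (f 0) * (f 0 * R') = R'"
    using assoc_mult_mat[of "minv (f 0)" m m "f 0" m R' m] m0 F R' f0 by simp
  moreover have "minv (f 0) * (F * minv (f 0)) = minv (f 0) * F * minv (f 0)"
    using assoc_mult_mat[of "minv (f 0)" m m F m "minv (f 0)" m] m0 F R' f0 by simp
  ultimately have "minv (f 0) * F * minv (f 0) + R' = 0\<^sub>m m m" by simp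
  hence "R' = - (minv (f 0) * F * minv (f 0))" using m0 F R'
    by (intro add_eq_0_mat) auto
  with r show ?thesis by simp
qed


section \<open>Index facts for J and A\<close>

definition sg :: "nat \<Rightarrow> nat \<Rightarrow> nat" where
  "sg n r = (if r < n then (r+1) mod n else n + (r - n + 1) mod n)"
definition tu :: "nat \<Rightarrow> nat \<Rightarrow> nat" where
  "tu n r = (if r < n then (r + (n-1)) mod n else n + (r - n + (n - 1)) mod n)"

lemma mod_suc_lt: "r < n \<Longrightarrow> (r+1) mod (n::nat) = (if r+1 = n then 0 else r+1)" by auto
lemma mod_pred_lt: assumes "j < (n::nat)" shows "(j+(n-1)) mod n = (if j = 0 then n-1 else j-1)"
proof (cases "j = 0")
  case False
  hence "j + (n-1) = (j - 1) + 1 * n" using assms by auto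
  hence "(j+(n-1)) mod n = (j-1) mod n" by (metis mod_mult_self1)
  thus ?thesis using False assms by auto
qed (use assms in auto)

lemma mod_lt2: "0 < n \<Longrightarrow> (a::nat) mod n < 2*n"
proof -
  assume "0 < n" hence "a mod n < n" by simp
  thus ?thesis by linarith
qed
lemma mod_ge_false[simp]: "0 < n \<Longrightarrow> (n \<le> (a::nat) mod n) = False"
  by (meson mod_less_divisor not_le)
lemma sg_lt: "0 < n \<Longrightarrow> r < 2*n \<Longrightarrow> sg n r < 2*n" unfolding sg_def by (auto simp: mod_lt2)
lemma tu_lt: "0 < n \<Longrightarrow> r < 2*n \<Longrightarrow> tu n r < 2*n" unfolding tu_def by (auto simp: mod_lt2)

lemma sg_tu: assumes n: "0 < n" and r: "r < 2*n" and j: "j < 2*n"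
  shows "(j = sg n r) = (r = tu n j)"
proof -
  consider "r < n" "j < n" | "r < n" "n \<le> j" | "n \<le> r" "j < n" | "n \<le> r" "n \<le> j" by linarith
  thus ?thesis
  proof cases
    case 1 thus ?thesis unfolding sg_def tu_def using mod_suc_lt[of r n] mod_pred_lt[of j n] by auto
  next
    case 2 thus ?thesis unfolding sg_def tu_def using n by auto
  next
    case 3 thus ?thesis unfolding sg_def tu_def using n
      by (auto simp: less_imp_le_nat)
  next
    case 4 thus ?thesis unfolding sg_def tu_def using mod_suc_lt[of "r-n" n] mod_pred_lt[of "j-n" n] r j
      by auto
  qed
qed

lemma Amat_carrier[simp]: "Amat n \<in> carrier_mat (2*n) (2*n)" unfolding Amat_def by simp
lemma Jmat_carrier[simp]: "Jmat n w \<in> carrier_mat (2*n) (2*n)" unfolding Jmat_def by simp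
lemma AJ_dims[simp]: "dim_row (Amat n) = 2*n" "dim_col (Amat n) = 2*n" "dim_row (Jmat n w) = 2*n" "dim_col (Jmat n w) = 2*n"
  unfolding Amat_def Jmat_def by auto

lemma Amat_index: assumes n: "0 < n" and r: "r < 2*n" and j: "j < 2*n"
  shows "Amat n $$ (r,j) = (if j = sg n r then 1 else 0)"
proof -
  consider "r < n" "j < n" | "r < n" "n \<le> j" | "n \<le> r" "j < n" | "n \<le> r" "n \<le> j" by linarith
  thus ?thesis
  proof cases
    case 4
    have "(j - n = (r - n + 1) mod n) = (j = n + (r - n + 1) mod n)" using 4 by auto
    thus ?thesis using 4 r j unfolding Amat_def Pmat_def sg_def by auto
  qed (use r j n in \<open>auto simp: Amat_def Pmat_def sg_def\<close>)
qed

lemma Jmat_index: assumes "a < 2*n" "b < 2*n"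
  shows "Jmat n w $$ (a,b) = (if a < n \<and> n \<le> b then w $ ((a + (b - n)) mod n)
     else if n \<le> a \<and> b < n then - (w $ ((a - n + b) mod n)) else 0)"
  using assms unfolding Jmat_def Xmat_def by auto

lemma sum_single: assumes "k < (m::nat)" shows "(\<Sum>r\<in>{0..<m}. if r = k then f r else (0::complex)) = f k"
  using assms by (auto simp: sum.delta sum.delta')

lemma mult_A_right: assumes n: "0 < n" and X: "X \<in> carrier_mat (2*n) (2*n)" and ij: "i < 2*n" "j < 2*n"
  shows "(X * Amat n) $$ (i,j) = X $$ (i, tu n j)"
proof -
  have "(X * Amat n) $$ (i,j) = (\<Sum>r\<in>{0..<2*n}. X $$ (i,r) * Amat n $$ (r,j))"
    using X ij by (simp add: scalar_prod_def)
  also have "\<dots> = (\<Sum>r\<in>{0..<2*n}. if r = tu n j then X $$ (i,r) else 0)"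
    by (intro sum.cong refl) (use n ij sg_tu in \<open>auto simp: Amat_index\<close>)
  finally show ?thesis using tu_lt[OF n ij(2)] by (simp add: sum_single)
qed

lemma mult_At_left: assumes n: "0 < n" and X: "X \<in> carrier_mat (2*n) (2*n)" and ij: "i < 2*n" "j < 2*n"
  shows "((Amat n)\<^sup>T * X) $$ (i,j) = X $$ (tu n i, j)"
proof -
  have "((Amat n)\<^sup>T * X) $$ (i,j) = (\<Sum>r\<in>{0..<2*n}. Amat n $$ (r,i) * X $$ (r,j))"
    using X ij by (simp add: scalar_prod_def)
  also have "\<dots> = (\<Sum>r\<in>{0..<2*n}. if r = tu n i then X $$ (r,j) else 0)"
    by (intro sum.cong refl) (use n ij sg_tu in \<open>auto simp: Amat_index\<close>)
  finally show ?thesis using tu_lt[OF n ij(1)] by (simp add: sum_single)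
qed

lemma mult_A_left: assumes n: "0 < n" and X: "X \<in> carrier_mat (2*n) (2*n)" and ij: "i < 2*n" "j < 2*n"
  shows "(Amat n * X) $$ (i,j) = X $$ (sg n i, j)"
proof -
  have "(Amat n * X) $$ (i,j) = (\<Sum>r\<in>{0..<2*n}. Amat n $$ (i,r) * X $$ (r,j))"
    using X ij by (simp add: scalar_prod_def)
  also have "\<dots> = (\<Sum>r\<in>{0..<2*n}. if r = sg n i then X $$ (r,j) else 0)"
    by (intro sum.cong refl) (use n ij sg_tu in \<open>auto simp: Amat_index\<close>)
  finally show ?thesis using sg_lt[OF n ij(1)] by (simp add: sum_single)
qed

lemma mult_At_right: assumes n: "0 < n" and X: "X \<in> carrier_mat (2*n) (2*n)" and ij: "i < 2*n" "j < 2*n"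
  shows "(X * (Amat n)\<^sup>T) $$ (i,j) = X $$ (i, sg n j)"
proof -
  have "(X * (Amat n)\<^sup>T) $$ (i,j) = (\<Sum>r\<in>{0..<2*n}. X $$ (i,r) * Amat n $$ (j,r))"
    using X ij by (simp add: scalar_prod_def)
  also have "\<dots> = (\<Sum>r\<in>{0..<2*n}. if r = sg n j then X $$ (i,r) else 0)"
    by (intro sum.cong refl) (use n ij sg_tu in \<open>auto simp: Amat_index\<close>)
  finally show ?thesis using sg_lt[OF n ij(2)] by (simp add: sum_single)
qed

lemma mult_At_vec: assumes n: "0 < n" and w: "w \<in> carrier_vec (2*n)" and i: "i < 2*n"
  shows "((Amat n)\<^sup>T *\<^sub>v w) $ i = w $ (tu n i)"
proof -
  have "((Amat n)\<^sup>T *\<^sub>v w) $ i = (\<Sum>r\<in>{0..<2*n}. Amat n $$ (r,i) * w $ r)"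
    using w i by (simp add: scalar_prod_def)
  also have "\<dots> = (\<Sum>r\<in>{0..<2*n}. if r = tu n i then w $ r else 0)"
    by (intro sum.cong refl) (use n i sg_tu in \<open>auto simp: Amat_index\<close>)
  finally show ?thesis using tu_lt[OF n i] by (simp add: sum_single)
qed

lemma JA: assumes n: "0 < n"
  shows "Jmat n w * Amat n = (Amat n)\<^sup>T * Jmat n w"
proof (rule eq_matI)
  fix i j assume ij: "i < dim_row ((Amat n)\<^sup>T * Jmat n w)" "j < dim_col ((Amat n)\<^sup>T * Jmat n w)"
  hence ij: "i < 2*n" "j < 2*n" by auto
  have l: "(Jmat n w * Amat n) $$ (i,j) = Jmat n w $$ (i, tu n j)" by (rule mult_A_right[OF n _ ij]) simp
  have r: "((Amat n)\<^sup>T * Jmat n w) $$ (i,j) = Jmat n w $$ (tu n i, j)" by (rule mult_At_left[OF n _ ij]) simp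
  have t1: "tu n i < 2*n" "tu n j < 2*n" using tu_lt n ij by auto
  consider "i < n" "j < n" | "i < n" "n \<le> j" | "n \<le> i" "j < n" | "n \<le> i" "n \<le> j" by linarith
  hence "Jmat n w $$ (i, tu n j) = Jmat n w $$ (tu n i, j)"
  proof cases
    case 2
    have "(i + (j - n + (n - 1)) mod n) mod n = ((i + (n - 1)) mod n + (j - n)) mod n"
      by (simp add: mod_add_right_eq mod_add_left_eq add_ac)
    thus ?thesis using 2 t1 n unfolding Jmat_index[OF ij(1) t1(2)] Jmat_index[OF t1(1) ij(2)]
      by (auto simp: tu_def)
  next
    case 3
    have "(i - n + (j + (n - 1)) mod n) mod n = ((i - n + (n - 1)) mod n + j) mod n"
      by (simp add: mod_add_right_eq mod_add_left_eq add_ac)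
    thus ?thesis using 3 t1 n unfolding Jmat_index[OF ij(1) t1(2)] Jmat_index[OF t1(1) ij(2)]
      by (auto simp: tu_def)
  qed (use t1 n ij in \<open>auto simp: Jmat_index tu_def\<close>)
  thus "(Jmat n w * Amat n) $$ (i, j) = ((Amat n)\<^sup>T * Jmat n w) $$ (i, j)" using l r by simp
qed auto

lemma JAt: assumes n: "0 < n" and w: "w \<in> carrier_vec (2*n)"
  shows "Jmat n ((Amat n)\<^sup>T *\<^sub>v w) = (Amat n)\<^sup>T * Jmat n w"
proof (rule eq_matI)
  fix i j assume ij: "i < dim_row ((Amat n)\<^sup>T * Jmat n w)" "j < dim_col ((Amat n)\<^sup>T * Jmat n w)"
  hence ij: "i < 2*n" "j < 2*n" by auto
  have r: "((Amat n)\<^sup>T * Jmat n w) $$ (i,j) = Jmat n w $$ (tu n i, j)" by (rule mult_At_left[OF n _ ij]) simp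
  have t1: "tu n i < 2*n" using tu_lt n ij by auto
  have v: "\<And>k. k < n \<Longrightarrow> ((Amat n)\<^sup>T *\<^sub>v w) $ k = w $ ((k + (n-1)) mod n)"
    using mult_At_vec[OF n w] by (auto simp: tu_def)
  consider "i < n" "j < n" | "i < n" "n \<le> j" | "n \<le> i" "j < n" | "n \<le> i" "n \<le> j" by linarith
  hence "Jmat n ((Amat n)\<^sup>T *\<^sub>v w) $$ (i, j) = Jmat n w $$ (tu n i, j)"
  proof cases
    case 2
    have mm: "((i + (j - n)) mod n + (n - 1)) mod n = ((i + (n - 1)) mod n + (j - n)) mod n"
      by (simp add: mod_add_right_eq mod_add_left_eq add_ac)
    have e1: "Jmat n ((Amat n)\<^sup>T *\<^sub>v w) $$ (i,j) = ((Amat n)\<^sup>T *\<^sub>v w) $ ((i + (j-n)) mod n)"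
      using Jmat_index[OF ij] 2 by simp
    have e2: "((Amat n)\<^sup>T *\<^sub>v w) $ ((i + (j-n)) mod n) = w $ (((i + (j - n)) mod n + (n - 1)) mod n)"
      by (rule v) (use n in simp)
    have e3: "Jmat n w $$ (tu n i, j) = w $ (((i + (n - 1)) mod n + (j - n)) mod n)"
      using Jmat_index[OF t1 ij(2)] 2 n by (simp add: tu_def)
    show ?thesis unfolding e1 e2 e3 mm by (rule refl)
  next
    case 3
    have mm: "((i - n + j) mod n + (n - 1)) mod n = ((i - n + (n - 1)) mod n + j) mod n"
      by (simp add: mod_add_right_eq mod_add_left_eq add_ac)
    have e1: "Jmat n ((Amat n)\<^sup>T *\<^sub>v w) $$ (i,j) = - (((Amat n)\<^sup>T *\<^sub>v w) $ ((i - n + j) mod n))"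
      using Jmat_index[OF ij] 3 by simp
    have e2: "((Amat n)\<^sup>T *\<^sub>v w) $ ((i - n + j) mod n) = w $ (((i - n + j) mod n + (n - 1)) mod n)"
      by (rule v) (use n in simp)
    have e3: "Jmat n w $$ (tu n i, j) = - (w $ ((tu n i - n + j) mod n))"
      using Jmat_index[OF t1 ij(2)] 3 n by (simp add: tu_def)
    have e4: "tu n i - n = (i - n + (n - 1)) mod n" using 3 by (simp add: tu_def)
    show ?thesis unfolding e1 e2 e3 e4 mm by (rule refl)
  qed (use t1 n ij in \<open>auto simp: Jmat_index tu_def\<close>)
  thus "Jmat n ((Amat n)\<^sup>T *\<^sub>v w) $$ (i, j) = ((Amat n)\<^sup>T * Jmat n w) $$ (i, j)" using r by simp
qed (auto simp: Jmat_def)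



context fixes n :: nat begin
lemma sq_assoc[simp]: "A \<in> carrier_mat (2*n) (2*n) \<Longrightarrow> B \<in> carrier_mat (2*n) (2*n) \<Longrightarrow> C \<in> carrier_mat (2*n) (2*n)
  \<Longrightarrow> (A * B) * C = A * (B * (C :: complex mat))" by (rule assoc_mult_mat)
lemma sq_mult_carrier[simp]: "A \<in> carrier_mat (2*n) (2*n) \<Longrightarrow> B \<in> carrier_mat (2*n) (2*n)
  \<Longrightarrow> A * (B :: complex mat) \<in> carrier_mat (2*n) (2*n)" by (rule mult_carrier_mat)
lemma sq_assoc_vec[simp]: "A \<in> carrier_mat (2*n) (2*n) \<Longrightarrow> B \<in> carrier_mat (2*n) (2*n) \<Longrightarrow> v \<in> carrier_vec (2*n)
  \<Longrightarrow> (A * B) *\<^sub>v v = A *\<^sub>v (B *\<^sub>v (v :: complex vec))" by (rule assoc_mult_mat_vec)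
lemma sq_pow_carrier[simp]: "A \<in> carrier_mat (2*n) (2*n) \<Longrightarrow> A ^\<^sub>m k \<in> carrier_mat (2*n) (2*n)" by simp
lemma sq_vec_carrier[simp]: "A \<in> carrier_mat (2*n) (2*n) \<Longrightarrow> v \<in> carrier_vec (2*n)
  \<Longrightarrow> A *\<^sub>v (v :: complex vec) \<in> carrier_vec (2*n)" by (rule mult_mat_vec_carrier)
lemma sq_trans_mult: "A \<in> carrier_mat (2*n) (2*n) \<Longrightarrow> B \<in> carrier_mat (2*n) (2*n)
  \<Longrightarrow> (A * B)\<^sup>T = B\<^sup>T * (A :: complex mat)\<^sup>T" by (rule transpose_mult)

section \<open>Good matrices (commuting with the Poisson structure)\<close>

definition goodJ :: "complex mat \<Rightarrow> bool" where
  "goodJ C \<longleftrightarrow> C \<in> carrier_mat (2*n) (2*n) \<and> (\<forall>w. Jmat n w * C = C\<^sup>T * Jmat n w) \<and>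
     (\<forall>w \<in> carrier_vec (2*n). Jmat n (C\<^sup>T *\<^sub>v w) = C\<^sup>T * Jmat n w)"

lemma goodJ_A: "0 < n \<Longrightarrow> goodJ (Amat n)"
  unfolding goodJ_def using JA JAt by auto

lemma goodJ_one: "goodJ (1\<^sub>m (2*n))"
  unfolding goodJ_def by (auto simp: right_mult_one_mat left_mult_one_mat)

lemma goodJ_mult: assumes g1: "goodJ C1" and g2: "goodJ C2" and c: "C1 * C2 = C2 * C1"
  shows "goodJ (C1 * C2)"
proof -
  have C1: "C1 \<in> carrier_mat (2*n) (2*n)" and C2: "C2 \<in> carrier_mat (2*n) (2*n)"
    using g1 g2 unfolding goodJ_def by auto
  have tr: "(C1 * C2)\<^sup>T = C1\<^sup>T * C2\<^sup>T"
    using c transpose_mult[OF C2 C1] by simp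
  have tr2: "(C1 * C2)\<^sup>T = C2\<^sup>T * C1\<^sup>T" using transpose_mult[OF C1 C2] .
  have j: "Jmat n w * (C1 * C2) = (C1 * C2)\<^sup>T * Jmat n w" for w
  proof -
    have "Jmat n w * (C1 * C2) = (Jmat n w * C1) * C2" using C1 C2 by (simp del: sq_assoc add: sq_assoc[symmetric])
    also have "\<dots> = (C1\<^sup>T * Jmat n w) * C2" using g1 unfolding goodJ_def by simp
    also have "\<dots> = C1\<^sup>T * (Jmat n w * C2)" using C1 C2 by (simp add: assoc_mult_mat[of _ "2*n" "2*n"])
    also have "\<dots> = C1\<^sup>T * (C2\<^sup>T * Jmat n w)" using g2 unfolding goodJ_def by simp
    also have "\<dots> = (C1\<^sup>T * C2\<^sup>T) * Jmat n w" using C1 C2 by simp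
    finally show ?thesis using tr by simp
  qed
  have v: "Jmat n ((C1 * C2)\<^sup>T *\<^sub>v w) = (C1 * C2)\<^sup>T * Jmat n w" if w: "w \<in> carrier_vec (2*n)" for w
  proof -
    have "(C1 * C2)\<^sup>T *\<^sub>v w = C2\<^sup>T *\<^sub>v (C1\<^sup>T *\<^sub>v w)" using tr2 C1 C2 w by simp
    hence "Jmat n ((C1 * C2)\<^sup>T *\<^sub>v w) = C2\<^sup>T * Jmat n (C1\<^sup>T *\<^sub>v w)"
      using g2 C1 w unfolding goodJ_def by simp
    also have "\<dots> = C2\<^sup>T * (C1\<^sup>T * Jmat n w)" using g1 w unfolding goodJ_def by simp
    also have "\<dots> = (C2\<^sup>T * C1\<^sup>T) * Jmat n w" using C1 C2 by simp
    finally show ?thesis using tr2 by simp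
  qed
  show ?thesis unfolding goodJ_def using j v C1 C2 by auto
qed

lemma pow_commute: assumes A: "A \<in> carrier_mat m m" shows "A ^\<^sub>m k * A = A * A ^\<^sub>m k"
proof (induction k)
  case 0 thus ?case using A by (simp add: right_mult_one_mat left_mult_one_mat)
next
  case (Suc k)
  have "A ^\<^sub>m Suc k * A = (A ^\<^sub>m k * A) * A" by simp
  also have "\<dots> = (A * A ^\<^sub>m k) * A" using Suc by simp
  also have "\<dots> = A * (A ^\<^sub>m k * A)" using assoc_mult_mat[OF A pow_carrier_mat[OF A] A] by simp
  finally show ?case by simp
qed

lemma goodJ_pow: assumes "goodJ A" shows "goodJ (A ^\<^sub>m k)"
proof (induction k)
  case 0
  have "A \<in> carrier_mat (2*n) (2*n)" using assms unfolding goodJ_def by auto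
  thus ?case using goodJ_one by simp
next
  case (Suc k)
  have A: "A \<in> carrier_mat (2*n) (2*n)" using assms unfolding goodJ_def by auto
  show ?case using goodJ_mult[OF Suc assms pow_commute[OF A]] by simp
qed

definition msum :: "(nat \<Rightarrow> complex) \<Rightarrow> (nat \<Rightarrow> complex mat) \<Rightarrow> complex mat" where
  "msum \<beta> Cs = mat (2*n) (2*n) (\<lambda>(i,j). \<Sum>k<n. \<beta> k * Cs k $$ (i,j))"

lemma Bmat_msum: "Bmat n \<alpha> = msum \<alpha> (\<lambda>k. Amat n ^\<^sub>m k)"
  unfolding Bmat_def msum_def by simp

lemma msum_carrier[simp]: "msum \<beta> Cs \<in> carrier_mat (2*n) (2*n)" unfolding msum_def by simp

lemma msum_mult_right: assumes Cs: "\<And>k. k < n \<Longrightarrow> Cs k \<in> carrier_mat (2*n) (2*n)"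
  and X: "X \<in> carrier_mat (2*n) (2*n)"
  shows "msum \<beta> Cs * X = msum \<beta> (\<lambda>k. Cs k * X)"
proof (rule eq_matI)
  fix i j assume ij: "i < dim_row (msum \<beta> (\<lambda>k. Cs k * X))" "j < dim_col (msum \<beta> (\<lambda>k. Cs k * X))"
  hence ij: "i < 2*n" "j < 2*n" unfolding msum_def by auto
  have "(msum \<beta> Cs * X) $$ (i,j) = (\<Sum>r\<in>{0..<2*n}. (\<Sum>k<n. \<beta> k * Cs k $$ (i,r)) * X $$ (r,j))"
    using ij X unfolding msum_def by (simp add: scalar_prod_def)
  also have "\<dots> = (\<Sum>k<n. \<beta> k * (\<Sum>r\<in>{0..<2*n}. Cs k $$ (i,r) * X $$ (r,j)))"
    by (simp add: sum_distrib_left sum_distrib_right sum.swap[of _ "{0..<2*n}"] mult.assoc)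
  also have "\<dots> = msum \<beta> (\<lambda>k. Cs k * X) $$ (i,j)"
  proof -
    have "\<And>k. k < n \<Longrightarrow> (Cs k * X) $$ (i,j) = (\<Sum>r\<in>{0..<2*n}. Cs k $$ (i,r) * X $$ (r,j))"
      subgoal for k using Cs[of k] X ij by (simp add: scalar_prod_def) done
    thus ?thesis using ij unfolding msum_def by auto
  qed
  finally show "(msum \<beta> Cs * X) $$ (i, j) = msum \<beta> (\<lambda>k. Cs k * X) $$ (i, j)" .
qed (use X in \<open>auto simp: msum_def\<close>)

lemma msum_mult_left: assumes Cs: "\<And>k. k < n \<Longrightarrow> Cs k \<in> carrier_mat (2*n) (2*n)"
  and X: "X \<in> carrier_mat (2*n) (2*n)"
  shows "X * msum \<beta> Cs = msum \<beta> (\<lambda>k. X * Cs k)"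
proof (rule eq_matI)
  fix i j assume ij: "i < dim_row (msum \<beta> (\<lambda>k. X * Cs k))" "j < dim_col (msum \<beta> (\<lambda>k. X * Cs k))"
  hence ij: "i < 2*n" "j < 2*n" unfolding msum_def by auto
  have "(X * msum \<beta> Cs) $$ (i,j) = (\<Sum>r\<in>{0..<2*n}. X $$ (i,r) * (\<Sum>k<n. \<beta> k * Cs k $$ (r,j)))"
    using ij X unfolding msum_def by (simp add: scalar_prod_def)
  also have "\<dots> = (\<Sum>r\<in>{0..<2*n}. \<Sum>k<n. \<beta> k * (X $$ (i,r) * Cs k $$ (r,j)))"
    by (simp add: sum_distrib_left mult_ac)
  also have "\<dots> = (\<Sum>k<n. \<Sum>r\<in>{0..<2*n}. \<beta> k * (X $$ (i,r) * Cs k $$ (r,j)))"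
    by (rule sum.swap)
  also have "\<dots> = (\<Sum>k<n. \<beta> k * (\<Sum>r\<in>{0..<2*n}. X $$ (i,r) * Cs k $$ (r,j)))"
    by (simp add: sum_distrib_left)
  also have "\<dots> = msum \<beta> (\<lambda>k. X * Cs k) $$ (i,j)"
  proof -
    have "\<And>k. k < n \<Longrightarrow> (X * Cs k) $$ (i,j) = (\<Sum>r\<in>{0..<2*n}. X $$ (i,r) * Cs k $$ (r,j))"
      subgoal for k using Cs[of k] X ij by (simp add: scalar_prod_def) done
    thus ?thesis using ij unfolding msum_def by auto
  qed
  finally show "(X * msum \<beta> Cs) $$ (i, j) = msum \<beta> (\<lambda>k. X * Cs k) $$ (i, j)" .
qed (use X in \<open>auto simp: msum_def\<close>)

lemma msum_index: "i < 2*n \<Longrightarrow> j < 2*n \<Longrightarrow> msum \<beta> Cs $$ (i,j) = (\<Sum>k<n. \<beta> k * Cs k $$ (i,j))"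
  unfolding msum_def by simp

lemma msum_transpose: assumes Cs: "\<And>k. k < n \<Longrightarrow> Cs k \<in> carrier_mat (2*n) (2*n)"
  shows "(msum \<beta> Cs)\<^sup>T = msum \<beta> (\<lambda>k. (Cs k)\<^sup>T)"
proof (rule eq_matI)
  fix i j assume ij: "i < dim_row (msum \<beta> (\<lambda>k. (Cs k)\<^sup>T))" "j < dim_col (msum \<beta> (\<lambda>k. (Cs k)\<^sup>T))"
  hence ij: "i < 2*n" "j < 2*n" unfolding msum_def by auto
  have "\<And>k. k < n \<Longrightarrow> (Cs k)\<^sup>T $$ (i,j) = Cs k $$ (j,i)"
    subgoal for k using Cs[of k] ij by simp done
  thus "(msum \<beta> Cs)\<^sup>T $$ (i, j) = msum \<beta> (\<lambda>k. (Cs k)\<^sup>T) $$ (i, j)"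
    using ij unfolding msum_def by auto
qed (auto simp: msum_def)

lemma msum_vec: assumes Cs: "\<And>k. k < n \<Longrightarrow> Cs k \<in> carrier_mat (2*n) (2*n)"
  and w: "w \<in> carrier_vec (2*n)" and i: "i < 2*n"
  shows "(msum \<beta> Cs *\<^sub>v w) $ i = (\<Sum>k<n. \<beta> k * (Cs k *\<^sub>v w) $ i)"
proof -
  have "(msum \<beta> Cs *\<^sub>v w) $ i = (\<Sum>r\<in>{0..<2*n}. (\<Sum>k<n. \<beta> k * Cs k $$ (i,r)) * w $ r)"
    using i w unfolding msum_def by (simp add: scalar_prod_def)
  also have "\<dots> = (\<Sum>r\<in>{0..<2*n}. \<Sum>k<n. \<beta> k * (Cs k $$ (i,r) * w $ r))"
    by (simp add: sum_distrib_left sum_distrib_right mult_ac)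
  also have "\<dots> = (\<Sum>k<n. \<Sum>r\<in>{0..<2*n}. \<beta> k * (Cs k $$ (i,r) * w $ r))"
    by (rule sum.swap)
  also have "\<dots> = (\<Sum>k<n. \<beta> k * (Cs k *\<^sub>v w) $ i)"
  proof (rule sum.cong)
    fix k assume "k \<in> {..<n}"
    thus "(\<Sum>r\<in>{0..<2*n}. \<beta> k * (Cs k $$ (i,r) * w $ r)) = \<beta> k * (Cs k *\<^sub>v w) $ i"
      using Cs[of k] i w by (simp add: scalar_prod_def sum_distrib_left)
  qed simp
  finally show ?thesis .
qed

lemma J_msum: assumes n: "0 < n" and Cs: "\<And>k. k < n \<Longrightarrow> Cs k \<in> carrier_mat (2*n) (2*n)"
  and w: "w \<in> carrier_vec (2*n)"
  shows "Jmat n (msum \<beta> Cs *\<^sub>v w) = msum \<beta> (\<lambda>k. Jmat n (Cs k *\<^sub>v w))"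
proof (rule eq_matI)
  fix a b assume ab: "a < dim_row (msum \<beta> (\<lambda>k. Jmat n (Cs k *\<^sub>v w)))" "b < dim_col (msum \<beta> (\<lambda>k. Jmat n (Cs k *\<^sub>v w)))"
  hence ab: "a < 2*n" "b < 2*n" unfolding msum_def by auto
  have i1: "(a + (b - n)) mod n < 2*n" "(a - n + b) mod n < 2*n" using n by (auto simp: mod_lt2)
  show "Jmat n (msum \<beta> Cs *\<^sub>v w) $$ (a, b) = msum \<beta> (\<lambda>k. Jmat n (Cs k *\<^sub>v w)) $$ (a, b)"
    unfolding Jmat_index[OF ab] msum_index[OF ab] using ab
    by (auto simp: Jmat_index msum_vec[OF Cs w] mod_lt2 n sum_negf)
qed (auto simp: msum_def)

lemma goodJ_msum: assumes n: "0 < n" and g: "\<And>k. k < n \<Longrightarrow> goodJ (Cs k)"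
  shows "goodJ (msum \<beta> Cs)"
proof -
  have Cs: "\<And>k. k < n \<Longrightarrow> Cs k \<in> carrier_mat (2*n) (2*n)" using g unfolding goodJ_def by auto
  have CsT: "\<And>k. k < n \<Longrightarrow> (Cs k)\<^sup>T \<in> carrier_mat (2*n) (2*n)" using Cs by simp
  have j: "Jmat n w * msum \<beta> Cs = (msum \<beta> Cs)\<^sup>T * Jmat n w" for w
  proof -
    have "Jmat n w * msum \<beta> Cs = msum \<beta> (\<lambda>k. Jmat n w * Cs k)" by (rule msum_mult_left[OF Cs]) auto
    also have "\<dots> = msum \<beta> (\<lambda>k. (Cs k)\<^sup>T * Jmat n w)"
      unfolding msum_def using g unfolding goodJ_def by (auto intro!: eq_matI sum.cong)
    also have "\<dots> = msum \<beta> (\<lambda>k. (Cs k)\<^sup>T) * Jmat n w" by (rule msum_mult_right[OF CsT, symmetric]) auto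
    finally show ?thesis using msum_transpose[OF Cs] by simp
  qed
  have v: "Jmat n ((msum \<beta> Cs)\<^sup>T *\<^sub>v w) = (msum \<beta> Cs)\<^sup>T * Jmat n w" if w: "w \<in> carrier_vec (2*n)" for w
  proof -
    have "Jmat n ((msum \<beta> Cs)\<^sup>T *\<^sub>v w) = Jmat n (msum \<beta> (\<lambda>k. (Cs k)\<^sup>T) *\<^sub>v w)"
      using msum_transpose[OF Cs] by simp
    also have "\<dots> = msum \<beta> (\<lambda>k. Jmat n ((Cs k)\<^sup>T *\<^sub>v w))" by (rule J_msum[OF n CsT w])
    also have "\<dots> = msum \<beta> (\<lambda>k. (Cs k)\<^sup>T * Jmat n w)"
      unfolding msum_def using g w unfolding goodJ_def by (auto intro!: eq_matI sum.cong)
    also have "\<dots> = msum \<beta> (\<lambda>k. (Cs k)\<^sup>T) * Jmat n w" by (rule msum_mult_right[OF CsT, symmetric]) auto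
    finally show ?thesis using msum_transpose[OF Cs] by simp
  qed
  show ?thesis unfolding goodJ_def using j v by auto
qed

lemma Mcomm_msum: assumes Cs: "\<And>k. k < n \<Longrightarrow> Cs k \<in> carrier_mat (2*n) (2*n)"
  and M: "M \<in> carrier_mat (2*n) (2*n)" and c: "\<And>k. k < n \<Longrightarrow> Cs k * M = M * (Cs k)\<^sup>T"
  shows "msum \<beta> Cs * M = M * (msum \<beta> Cs)\<^sup>T"
proof -
  have CsT: "\<And>k. k < n \<Longrightarrow> (Cs k)\<^sup>T \<in> carrier_mat (2*n) (2*n)" using Cs by simp
  have "msum \<beta> Cs * M = msum \<beta> (\<lambda>k. Cs k * M)" by (rule msum_mult_right[OF Cs M])
  also have "\<dots> = msum \<beta> (\<lambda>k. M * (Cs k)\<^sup>T)" unfolding msum_def using c by (auto intro!: eq_matI sum.cong)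
  also have "\<dots> = M * msum \<beta> (\<lambda>k. (Cs k)\<^sup>T)" by (rule msum_mult_left[OF CsT M, symmetric])
  finally show ?thesis using msum_transpose[OF Cs] by simp
qed

lemma Mcomm_pow: fixes A M :: "complex mat" assumes A: "A \<in> carrier_mat (2*n) (2*n)" and M: "M \<in> carrier_mat (2*n) (2*n)"
  and c: "A * M = M * A\<^sup>T" shows "A ^\<^sub>m k * M = M * (A ^\<^sub>m k)\<^sup>T"
proof (induction k)
  case 0 thus ?case using A M by (simp add: left_mult_one_mat right_mult_one_mat)
next
  case (Suc k)
  have Ak: "A ^\<^sub>m k \<in> carrier_mat (2*n) (2*n)" using A by simp
  have "A ^\<^sub>m Suc k * M = A ^\<^sub>m k * (A * M)" using assoc_mult_mat[OF Ak A M] by simp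
  also have "\<dots> = (A ^\<^sub>m k * M) * A\<^sup>T" using c A M Ak by simp
  also have "\<dots> = M * ((A ^\<^sub>m k)\<^sup>T * A\<^sup>T)" using Suc A M Ak by simp
  also have "(A ^\<^sub>m k)\<^sup>T * A\<^sup>T = (A ^\<^sub>m Suc k)\<^sup>T"
    using sq_trans_mult[OF A Ak] pow_commute[OF A, of k] by simp
  finally show ?case .
qed

lemma msum_comm: assumes Cs: "\<And>k. k < n \<Longrightarrow> Cs k \<in> carrier_mat (2*n) (2*n)"
  and X: "X \<in> carrier_mat (2*n) (2*n)" and c: "\<And>k. k < n \<Longrightarrow> Cs k * X = X * Cs k"
  shows "msum \<beta> Cs * X = X * msum \<beta> Cs"
proof -
  have "msum \<beta> Cs * X = msum \<beta> (\<lambda>k. Cs k * X)" by (rule msum_mult_right[OF Cs X])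
  also have "\<dots> = msum \<beta> (\<lambda>k. X * Cs k)" unfolding msum_def using c by (auto intro!: eq_matI sum.cong)
  also have "\<dots> = X * msum \<beta> Cs" by (rule msum_mult_left[OF Cs X, symmetric])
  finally show ?thesis .
qed

section \<open>Calculus along lines\<close>

lemma mhd_eq: "mhd m k f F \<Longrightarrow> F = G \<Longrightarrow> mhd m k f G" by simp

lemma mhd_linear: "X \<in> carrier_mat m k \<Longrightarrow> mhd m k (\<lambda>s. s \<cdot>\<^sub>m X) X"
  unfolding mhd_def by (auto intro!: derivative_eq_intros)

lemma Jmat_lin: assumes y: "y \<in> carrier_vec (2*n)" and u: "u \<in> carrier_vec (2*n)" and n: "0 < n"
  shows "Jmat n (y + s \<cdot>\<^sub>v u) = Jmat n y + s \<cdot>\<^sub>m Jmat n u"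
proof (rule eq_matI)
  fix a b assume "a < dim_row (Jmat n y + s \<cdot>\<^sub>m Jmat n u)" "b < dim_col (Jmat n y + s \<cdot>\<^sub>m Jmat n u)"
  hence ab: "a < 2*n" "b < 2*n" by auto
  have i1: "(a + (b - n)) mod n < 2*n" "(a - n + b) mod n < 2*n" using n by (auto simp: mod_lt2)
  show "Jmat n (y + s \<cdot>\<^sub>v u) $$ (a, b) = (Jmat n y + s \<cdot>\<^sub>m Jmat n u) $$ (a, b)"
    using ab y u i1 n by (auto simp: Jmat_index mod_lt2 algebra_simps)
qed auto

lemma mhd_Jline: assumes y: "y \<in> carrier_vec (2*n)" and u: "u \<in> carrier_vec (2*n)" and n: "0 < n"
  shows "mhd (2*n) (2*n) (\<lambda>s. Jmat n (y + s \<cdot>\<^sub>v u)) (Jmat n u)"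
proof -
  have "mhd (2*n) (2*n) (\<lambda>s. Jmat n y + s \<cdot>\<^sub>m Jmat n u) (0\<^sub>m (2*n) (2*n) + Jmat n u)"
    by (intro mhd_add mhd_const mhd_linear) auto
  hence "mhd (2*n) (2*n) (\<lambda>s. Jmat n y + s \<cdot>\<^sub>m Jmat n u) (Jmat n u)" by simp
  thus ?thesis by (rule mhd_cong) (use Jmat_lin[OF y u n] in simp)
qed

lemma line0[simp]: "y \<in> carrier_vec m \<Longrightarrow> u \<in> carrier_vec m \<Longrightarrow> y + (0::complex) \<cdot>\<^sub>v u = y"
  by (intro eq_vecI) auto

lemma form_deriv: assumes p: "p \<in> carrier_vec (2*n)" and p': "p' \<in> carrier_vec (2*n)"
  and q: "q \<in> carrier_vec (2*n)" and q': "q' \<in> carrier_vec (2*n)" and f: "mhd (2*n) (2*n) f F"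
  shows "((\<lambda>s. (p + s \<cdot>\<^sub>v p') \<bullet> (f s *\<^sub>v (q + s \<cdot>\<^sub>v q'))) has_field_derivative
     (p' \<bullet> (f 0 *\<^sub>v q) + p \<bullet> (F *\<^sub>v q) + p \<bullet> (f 0 *\<^sub>v q'))) (at 0)"
proof -
  have f0: "f 0 \<in> carrier_mat (2*n) (2*n)" and F: "F \<in> carrier_mat (2*n) (2*n)" using mhd_carrier[OF f] by auto
  let ?S = "{0..<2*n}"
  have d: "((\<lambda>s. \<Sum>i\<in>?S. (p$i + s*p'$i) * (\<Sum>j\<in>?S. f s $$ (i,j) * (q$j + s*q'$j))) has_field_derivative
     (\<Sum>i\<in>?S. p'$i * (\<Sum>j\<in>?S. f 0 $$ (i,j) * q$j) + p$i * (\<Sum>j\<in>?S. F $$ (i,j) * q$j + f 0 $$ (i,j) * q'$j))) (at 0)"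
    by (intro DERIV_sum)
       (auto intro!: derivative_eq_intros mhd_D[OF f] simp: sum.distrib algebra_simps)
  have e: "\<forall>\<^sub>F s in nhds 0. (\<Sum>i\<in>?S. (p$i + s*p'$i) * (\<Sum>j\<in>?S. f s $$ (i,j) * (q$j + s*q'$j)))
      = (p + s \<cdot>\<^sub>v p') \<bullet> (f s *\<^sub>v (q + s \<cdot>\<^sub>v q'))"
    using mhd_ev[OF f] by eventually_elim (use p p' q q' in \<open>auto simp: scalar_prod_def intro!: sum.cong\<close>)
  have v: "(\<Sum>i\<in>?S. p'$i * (\<Sum>j\<in>?S. f 0 $$ (i,j) * q$j) + p$i * (\<Sum>j\<in>?S. F $$ (i,j) * q$j + f 0 $$ (i,j) * q'$j))
     = p' \<bullet> (f 0 *\<^sub>v q) + p \<bullet> (F *\<^sub>v q) + p \<bullet> (f 0 *\<^sub>v q')"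
    using p p' q q' f0 F by (auto simp: scalar_prod_def sum.distrib algebra_simps intro!: sum.cong)
  show ?thesis using d e v DERIV_cong_ev[of 0 0] by fastforce
qed


lemma sq_zero_right[simp]: "A \<in> carrier_mat (2*n) (2*n) \<Longrightarrow> A * 0\<^sub>m (2*n) (2*n) = (0\<^sub>m (2*n) (2*n) :: complex mat)"
  by (intro eq_matI) auto
lemma sq_zero_left[simp]: "A \<in> carrier_mat (2*n) (2*n) \<Longrightarrow> 0\<^sub>m (2*n) (2*n) * A = (0\<^sub>m (2*n) (2*n) :: complex mat)"
  by (intro eq_matI) auto
lemma sq_add_zero_r[simp]: "A \<in> carrier_mat (2*n) (2*n) \<Longrightarrow> A + 0\<^sub>m (2*n) (2*n) = (A :: complex mat)"
  by (intro eq_matI) auto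
lemma sq_add_zero_l[simp]: "A \<in> carrier_mat (2*n) (2*n) \<Longrightarrow> 0\<^sub>m (2*n) (2*n) + A = (A :: complex mat)"
  by (intro eq_matI) auto
lemma sq_zero_minus[simp]: "A \<in> carrier_mat (2*n) (2*n) \<Longrightarrow> 0\<^sub>m (2*n) (2*n) - A = - (A :: complex mat)"
  by (intro eq_matI) auto
lemma sq_smult_right[simp]: "A \<in> carrier_mat (2*n) (2*n) \<Longrightarrow> B \<in> carrier_mat (2*n) (2*n) \<Longrightarrow> A * (c \<cdot>\<^sub>m B) = c \<cdot>\<^sub>m (A * (B :: complex mat))"
  by (rule mult_smult_distrib)
lemma sq_smult_left[simp]: "A \<in> carrier_mat (2*n) (2*n) \<Longrightarrow> B \<in> carrier_mat (2*n) (2*n) \<Longrightarrow> (c \<cdot>\<^sub>m A) * B = c \<cdot>\<^sub>m (A * (B :: complex mat))"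
  by (rule mult_smult_assoc_mat)
lemma sq_uminus_right[simp]: "A \<in> carrier_mat (2*n) (2*n) \<Longrightarrow> B \<in> carrier_mat (2*n) (2*n) \<Longrightarrow> A * (- B) = - (A * (B :: complex mat))"
  by (rule uminus_mult_right_mat) auto
lemma sq_uminus_left[simp]: "A \<in> carrier_mat (2*n) (2*n) \<Longrightarrow> B \<in> carrier_mat (2*n) (2*n) \<Longrightarrow> (- A) * B = - (A * (B :: complex mat))"
  by (rule uminus_mult_left_mat) auto
lemma sq_uminus_carrier[simp]: "A \<in> carrier_mat (2*n) (2*n) \<Longrightarrow> - A \<in> carrier_mat (2*n) (2*n)"
  by (rule uminus_carrier_mat)
lemma sq_minus_carrier[simp]: "B \<in> carrier_mat (2*n) (2*n) \<Longrightarrow> A - B \<in> carrier_mat (2*n) (2*n)"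
  by (rule minus_carrier_mat)
lemma sq_smult_uminus[simp]: "c \<cdot>\<^sub>m (- A) = - (c \<cdot>\<^sub>m (A :: complex mat))"
  by (intro eq_matI) auto

definition Pm :: "complex mat \<Rightarrow> complex vec \<Rightarrow> complex vec \<Rightarrow> complex mat" where
  "Pm M u y = (Jmat n u * M) * (Jmat n y * M) + (Jmat n y * M) * (Jmat n u * M)"
definition Rm :: "complex mat \<Rightarrow> complex vec \<Rightarrow> real \<Rightarrow> complex mat" where
  "Rm M y e = minv (Dmat n M y e)"
definition R1 :: "complex mat \<Rightarrow> complex vec \<Rightarrow> real \<Rightarrow> complex vec \<Rightarrow> complex mat" where
  "R1 M y e u = (complex_of_real e)^2 \<cdot>\<^sub>m (Rm M y e * Pm M u y * Rm M y e)"
definition Pm2 :: "complex mat \<Rightarrow> complex vec \<Rightarrow> complex vec \<Rightarrow> complex mat" where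
  "Pm2 M u v = (Jmat n v * M) * (Jmat n u * M) + (Jmat n u * M) * (Jmat n v * M)"
definition Lf :: "complex mat \<Rightarrow> complex mat \<Rightarrow> complex vec \<Rightarrow> real \<Rightarrow> complex vec \<Rightarrow> complex" where
  "Lf X M y e u = u \<bullet> ((X * Rm M y e) *\<^sub>v y) + y \<bullet> ((X * R1 M y e u) *\<^sub>v y) + y \<bullet> ((X * Rm M y e) *\<^sub>v u)"
definition Wf :: "complex mat \<Rightarrow> complex vec \<Rightarrow> real \<Rightarrow> complex vec \<Rightarrow> complex vec \<Rightarrow> complex" where
  "Wf M y e u v =
     (v \<bullet> ((M * R1 M y e u) *\<^sub>v y) + v \<bullet> ((M * Rm M y e) *\<^sub>v u))
   + (u \<bullet> ((M * R1 M y e v) *\<^sub>v y)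
      + y \<bullet> ((M * ((complex_of_real e)^2 \<cdot>\<^sub>m ((R1 M y e u * Pm M v y + Rm M y e * Pm2 M u v) * Rm M y e
                + (Rm M y e * Pm M v y) * R1 M y e u))) *\<^sub>v y)
      + y \<bullet> ((M * R1 M y e v) *\<^sub>v u))
   + (u \<bullet> ((M * Rm M y e) *\<^sub>v v) + y \<bullet> ((M * R1 M y e u) *\<^sub>v v))"

lemma Dmat_carrier[simp]: "M \<in> carrier_mat (2*n) (2*n) \<Longrightarrow> Dmat n M y e \<in> carrier_mat (2*n) (2*n)"
  unfolding Dmat_def by simp
lemma Pm_carrier[simp]: "M \<in> carrier_mat (2*n) (2*n) \<Longrightarrow> Pm M u y \<in> carrier_mat (2*n) (2*n)"
  unfolding Pm_def by simp
lemma Pm2_carrier[simp]: "M \<in> carrier_mat (2*n) (2*n) \<Longrightarrow> Pm2 M u v \<in> carrier_mat (2*n) (2*n)"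
  unfolding Pm2_def by simp
lemma Rm_props: "M \<in> carrier_mat (2*n) (2*n) \<Longrightarrow> det (Dmat n M y e) \<noteq> 0 \<Longrightarrow>
   Rm M y e \<in> carrier_mat (2*n) (2*n) \<and> Dmat n M y e * Rm M y e = 1\<^sub>m (2*n) \<and> Rm M y e * Dmat n M y e = 1\<^sub>m (2*n)"
  unfolding Rm_def using minv[of "Dmat n M y e" "2*n"] by simp
lemma R1_carrier[simp]: "M \<in> carrier_mat (2*n) (2*n) \<Longrightarrow> det (Dmat n M y e) \<noteq> 0 \<Longrightarrow> R1 M y e u \<in> carrier_mat (2*n) (2*n)"
  unfolding R1_def using Rm_props by simp

lemma mhd_Dline: assumes M: "M \<in> carrier_mat (2*n) (2*n)" and y: "y \<in> carrier_vec (2*n)"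
  and u: "u \<in> carrier_vec (2*n)" and n: "0 < n"
  shows "mhd (2*n) (2*n) (\<lambda>s. Dmat n M (y + s \<cdot>\<^sub>v u) e) (- ((complex_of_real e)^2 \<cdot>\<^sub>m Pm M u y))"
proof -
  have JM: "mhd (2*n) (2*n) (\<lambda>s. Jmat n (y + s \<cdot>\<^sub>v u) * M) (Jmat n u * M)"
    using mhd_mult[OF mhd_Jline[OF y u n] mhd_const[OF M]] y u M by simp
  have "mhd (2*n) (2*n) (\<lambda>s. 1\<^sub>m (2*n) - (complex_of_real e)^2 \<cdot>\<^sub>m ((Jmat n (y + s \<cdot>\<^sub>v u) * M) * (Jmat n (y + s \<cdot>\<^sub>v u) * M)))
     (0\<^sub>m (2*n) (2*n) - (complex_of_real e)^2 \<cdot>\<^sub>m ((Jmat n u * M) * (Jmat n (y + 0 \<cdot>\<^sub>v u) * M)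
       + (Jmat n (y + 0 \<cdot>\<^sub>v u) * M) * (Jmat n u * M)))"
    using mhd_diff[OF mhd_const[of "1\<^sub>m (2*n)"] mhd_smult[OF mhd_mult[OF JM JM]]] by simp
  thus ?thesis unfolding Dmat_def Pm_def using M y u by simp
qed

lemma mhd_Rline: assumes M: "M \<in> carrier_mat (2*n) (2*n)" and y: "y \<in> carrier_vec (2*n)"
  and u: "u \<in> carrier_vec (2*n)" and n: "0 < n" and d: "det (Dmat n M y e) \<noteq> 0"
  shows "mhd (2*n) (2*n) (\<lambda>s. Rm M (y + s \<cdot>\<^sub>v u) e) (R1 M y e u)"
proof -
  have "mhd (2*n) (2*n) (\<lambda>s. minv (Dmat n M (y + s \<cdot>\<^sub>v u) e))
     (- (minv (Dmat n M (y + 0 \<cdot>\<^sub>v u) e) * (- ((complex_of_real e)^2 \<cdot>\<^sub>m Pm M u y)) * minv (Dmat n M (y + 0 \<cdot>\<^sub>v u) e)))"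
    by (rule mhd_inv[OF mhd_Dline[OF M y u n]]) (use d y u in simp)
  thus ?thesis unfolding R1_def Rm_def[symmetric] using Rm_props[OF M d] y u M by simp
qed


lemma smult_zero_v[simp]: "(a::complex) \<cdot>\<^sub>v 0\<^sub>v m = 0\<^sub>v m" by (intro eq_vecI) auto
lemma mat_vec_zero[simp]: "A \<in> carrier_mat m k \<Longrightarrow> A *\<^sub>v 0\<^sub>v k = (0\<^sub>v m :: complex vec)"
  by (intro eq_vecI) (auto simp: scalar_prod_def)

lemma sq_mat_vec_zero[simp]: "A \<in> carrier_mat (2*n) (2*n) \<Longrightarrow> A *\<^sub>v 0\<^sub>v (2*n) = (0\<^sub>v (2*n) :: complex vec)"
  by (rule mat_vec_zero)

lemma mhd_JMline: assumes M: "M \<in> carrier_mat (2*n) (2*n)" and y: "y \<in> carrier_vec (2*n)"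
  and u: "u \<in> carrier_vec (2*n)" and n: "0 < n"
  shows "mhd (2*n) (2*n) (\<lambda>s. Jmat n (y + s \<cdot>\<^sub>v u) * M) (Jmat n u * M)"
  using mhd_mult[OF mhd_Jline[OF y u n] mhd_const[OF M]] y u M by simp

lemma mhd_XRline: assumes M: "M \<in> carrier_mat (2*n) (2*n)" and X: "X \<in> carrier_mat (2*n) (2*n)"
  and y: "y \<in> carrier_vec (2*n)" and u: "u \<in> carrier_vec (2*n)" and n: "0 < n" and d: "det (Dmat n M y e) \<noteq> 0"
  shows "mhd (2*n) (2*n) (\<lambda>s. X * Rm M (y + s \<cdot>\<^sub>v u) e) (X * R1 M y e u)"
  using mhd_mult[OF mhd_const[OF X] mhd_Rline[OF M y u n d]] Rm_props[OF M d] M X d y u by simp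

lemma F_deriv: assumes M: "M \<in> carrier_mat (2*n) (2*n)" and X: "X \<in> carrier_mat (2*n) (2*n)"
  and y: "y \<in> carrier_vec (2*n)" and u: "u \<in> carrier_vec (2*n)" and n: "0 < n" and d: "det (Dmat n M y e) \<noteq> 0"
  shows "((\<lambda>t. (y + t \<cdot>\<^sub>v u) \<bullet> ((X * minv (Dmat n M (y + t \<cdot>\<^sub>v u) e)) *\<^sub>v (y + t \<cdot>\<^sub>v u)))
     has_field_derivative Lf X M y e u) (at 0)"
  using form_deriv[OF y u y u mhd_XRline[OF M X y u n d]] y u unfolding Lf_def Rm_def by simp

lemma mhd_Pvline: assumes M: "M \<in> carrier_mat (2*n) (2*n)" and y: "y \<in> carrier_vec (2*n)"
  and u: "u \<in> carrier_vec (2*n)" and n: "0 < n"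
  shows "mhd (2*n) (2*n) (\<lambda>s. Pm M v (y + s \<cdot>\<^sub>v u)) (Pm2 M u v)"
proof -
  have c: "Jmat n v * M \<in> carrier_mat (2*n) (2*n)" using M by simp
  have "mhd (2*n) (2*n) (\<lambda>s. (Jmat n v * M) * (Jmat n (y + s \<cdot>\<^sub>v u) * M) + (Jmat n (y + s \<cdot>\<^sub>v u) * M) * (Jmat n v * M))
    (0\<^sub>m (2*n) (2*n) * (Jmat n (y + 0 \<cdot>\<^sub>v u) * M) + (Jmat n v * M) * (Jmat n u * M)
     + ((Jmat n u * M) * (Jmat n v * M) + (Jmat n (y + 0 \<cdot>\<^sub>v u) * M) * 0\<^sub>m (2*n) (2*n)))"
    by (rule mhd_add[OF mhd_mult[OF mhd_const[OF c] mhd_JMline[OF M y u n]] mhd_mult[OF mhd_JMline[OF M y u n] mhd_const[OF c]]])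
  thus ?thesis unfolding Pm_def Pm2_def using M y u by simp
qed

lemma mhd_R1line: assumes M: "M \<in> carrier_mat (2*n) (2*n)"
  and y: "y \<in> carrier_vec (2*n)" and u: "u \<in> carrier_vec (2*n)" and n: "0 < n" and d: "det (Dmat n M y e) \<noteq> 0"
  shows "mhd (2*n) (2*n) (\<lambda>s. M * R1 M (y + s \<cdot>\<^sub>v u) e v)
    (M * ((complex_of_real e)^2 \<cdot>\<^sub>m ((R1 M y e u * Pm M v y + Rm M y e * Pm2 M u v) * Rm M y e
                + (Rm M y e * Pm M v y) * R1 M y e u)))"
proof -
  note R = Rm_props[OF M d]
  have "mhd (2*n) (2*n) (\<lambda>s. (complex_of_real e)^2 \<cdot>\<^sub>m (Rm M (y + s \<cdot>\<^sub>v u) e * Pm M v (y + s \<cdot>\<^sub>v u) * Rm M (y + s \<cdot>\<^sub>v u) e))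
     ((complex_of_real e)^2 \<cdot>\<^sub>m ((R1 M y e u * Pm M v (y + 0 \<cdot>\<^sub>v u) + Rm M (y + 0 \<cdot>\<^sub>v u) e * Pm2 M u v) * Rm M (y + 0 \<cdot>\<^sub>v u) e
                + (Rm M (y + 0 \<cdot>\<^sub>v u) e * Pm M v (y + 0 \<cdot>\<^sub>v u)) * R1 M y e u))"
    by (rule mhd_smult[OF mhd_mult[OF mhd_mult[OF mhd_Rline[OF M y u n d] mhd_Pvline[OF M y u n]] mhd_Rline[OF M y u n d]]])
  hence "mhd (2*n) (2*n) (\<lambda>s. R1 M (y + s \<cdot>\<^sub>v u) e v)
     ((complex_of_real e)^2 \<cdot>\<^sub>m ((R1 M y e u * Pm M v y + Rm M y e * Pm2 M u v) * Rm M y e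
                + (Rm M y e * Pm M v y) * R1 M y e u))"
    unfolding R1_def[of M "y + _ \<cdot>\<^sub>v u"] using y u by simp
  from mhd_mult[OF mhd_const[OF M] this] show ?thesis using M R d y u by simp
qed


lemma Lf_deriv: assumes M: "M \<in> carrier_mat (2*n) (2*n)"
  and y: "y \<in> carrier_vec (2*n)" and u: "u \<in> carrier_vec (2*n)" and v: "v \<in> carrier_vec (2*n)"
  and n: "0 < n" and d: "det (Dmat n M y e) \<noteq> 0"
  shows "((\<lambda>s. Lf M M (y + s \<cdot>\<^sub>v u) e v) has_field_derivative Wf M y e u v) (at 0)"
proof -
  note R = Rm_props[OF M d]
  have z: "0\<^sub>v (2*n) \<in> carrier_vec (2*n)" by simp
  have d1: "((\<lambda>s. v \<bullet> ((M * Rm M (y + s \<cdot>\<^sub>v u) e) *\<^sub>v (y + s \<cdot>\<^sub>v u))) has_field_derivative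
      (v \<bullet> ((M * R1 M y e u) *\<^sub>v y) + v \<bullet> ((M * Rm M y e) *\<^sub>v u))) (at 0)"
    using form_deriv[OF v z y u mhd_XRline[OF M M y u n d]] y u v M R by simp
  have d2: "((\<lambda>s. (y + s \<cdot>\<^sub>v u) \<bullet> ((M * R1 M (y + s \<cdot>\<^sub>v u) e v) *\<^sub>v (y + s \<cdot>\<^sub>v u))) has_field_derivative
      (u \<bullet> ((M * R1 M y e v) *\<^sub>v y)
      + y \<bullet> ((M * ((complex_of_real e)^2 \<cdot>\<^sub>m ((R1 M y e u * Pm M v y + Rm M y e * Pm2 M u v) * Rm M y e
                + (Rm M y e * Pm M v y) * R1 M y e u))) *\<^sub>v y)
      + y \<bullet> ((M * R1 M y e v) *\<^sub>v u))) (at 0)"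
    using form_deriv[OF y u y u mhd_R1line[OF M y u n d]] y u v M R by simp
  have d3: "((\<lambda>s. (y + s \<cdot>\<^sub>v u) \<bullet> ((M * Rm M (y + s \<cdot>\<^sub>v u) e) *\<^sub>v v)) has_field_derivative
      (u \<bullet> ((M * Rm M y e) *\<^sub>v v) + y \<bullet> ((M * R1 M y e u) *\<^sub>v v))) (at 0)"
    using form_deriv[OF y u v z mhd_XRline[OF M M y u n d]] y u v M R by simp
  show ?thesis unfolding Lf_def Wf_def by (rule DERIV_add[OF DERIV_add[OF d1 d2] d3])
qed


lemma sq_add_mult[simp]: "A \<in> carrier_mat (2*n) (2*n) \<Longrightarrow> B \<in> carrier_mat (2*n) (2*n) \<Longrightarrow> C \<in> carrier_mat (2*n) (2*n)
  \<Longrightarrow> (A + B) * C = A * C + B * (C :: complex mat)" by (rule add_mult_distrib_mat)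
lemma sq_mult_add[simp]: "A \<in> carrier_mat (2*n) (2*n) \<Longrightarrow> B \<in> carrier_mat (2*n) (2*n) \<Longrightarrow> C \<in> carrier_mat (2*n) (2*n)
  \<Longrightarrow> A * (B + C) = A * B + A * (C :: complex mat)" by (rule mult_add_distrib_mat)
lemma sq_add_mat_vec[simp]: "A \<in> carrier_mat (2*n) (2*n) \<Longrightarrow> B \<in> carrier_mat (2*n) (2*n) \<Longrightarrow> v \<in> carrier_vec (2*n)
  \<Longrightarrow> (A + B) *\<^sub>v v = A *\<^sub>v v + B *\<^sub>v (v :: complex vec)" by (rule add_mult_distrib_mat_vec)
lemma sq_smult_mat_vec[simp]: "A \<in> carrier_mat (2*n) (2*n) \<Longrightarrow> v \<in> carrier_vec (2*n)
  \<Longrightarrow> (c \<cdot>\<^sub>m A) *\<^sub>v v = c \<cdot>\<^sub>v (A *\<^sub>v (v :: complex vec))" by (intro eq_vecI) (auto simp: scalar_prod_def sum_distrib_left mult_ac)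
lemma sq_scal_add[simp]: "u \<in> carrier_vec (2*n) \<Longrightarrow> v \<in> carrier_vec (2*n) \<Longrightarrow> w \<in> carrier_vec (2*n)
  \<Longrightarrow> u \<bullet> (v + w) = u \<bullet> v + u \<bullet> (w :: complex vec)" by (rule scalar_prod_add_distrib)
lemma sq_scal_smult[simp]: "u \<in> carrier_vec (2*n) \<Longrightarrow> v \<in> carrier_vec (2*n)
  \<Longrightarrow> u \<bullet> (c \<cdot>\<^sub>v v) = c * (u \<bullet> (v :: complex vec))" by (rule scalar_prod_smult_distrib)
lemma sq_add_carrier[simp]: "A \<in> carrier_mat (2*n) (2*n) \<Longrightarrow> B \<in> carrier_mat (2*n) (2*n) \<Longrightarrow> A + B \<in> carrier_mat (2*n) (2*n)"
  by simp
lemma sq_Rm_carrier[simp]: "M \<in> carrier_mat (2*n) (2*n) \<Longrightarrow> det (Dmat n M y e) \<noteq> 0 \<Longrightarrow> Rm M y e \<in> carrier_mat (2*n) (2*n)"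
  using Rm_props by blast

lemma TJM: assumes M: "M \<in> carrier_mat (2*n) (2*n)" and g: "goodJ C" and cm: "C * M = M * C\<^sup>T"
  shows "C\<^sup>T * (Jmat n w * M) = (Jmat n w * M) * C\<^sup>T"
proof -
  have C: "C \<in> carrier_mat (2*n) (2*n)" using g unfolding goodJ_def by auto
  have "C\<^sup>T * (Jmat n w * M) = (C\<^sup>T * Jmat n w) * M" using C M by simp
  also have "\<dots> = (Jmat n w * C) * M" using g unfolding goodJ_def by simp
  also have "\<dots> = Jmat n w * (M * C\<^sup>T)" using C M cm by simp
  finally show ?thesis using C M by simp
qed

lemma TPm: assumes M: "M \<in> carrier_mat (2*n) (2*n)" and g: "goodJ C" and cm: "C * M = M * C\<^sup>T"
  shows "C\<^sup>T * Pm M u y = Pm M u y * C\<^sup>T" "C\<^sup>T * Pm2 M u y = Pm2 M u y * C\<^sup>T"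
proof -
  have C: "C \<in> carrier_mat (2*n) (2*n)" using g unfolding goodJ_def by auto
  have t: "\<And>w (X::complex mat). X \<in> carrier_mat (2*n) (2*n) \<Longrightarrow> C\<^sup>T * (Jmat n w * (M * X)) = Jmat n w * (M * (C\<^sup>T * X))"
  proof -
    fix w and X :: "complex mat" assume X: "X \<in> carrier_mat (2*n) (2*n)"
    have "C\<^sup>T * (Jmat n w * (M * X)) = (C\<^sup>T * (Jmat n w * M)) * X" using C M X by simp
    also have "\<dots> = Jmat n w * (M * (C\<^sup>T * X))" unfolding TJM[OF M g cm] using C M X by simp
    finally show "C\<^sup>T * (Jmat n w * (M * X)) = Jmat n w * (M * (C\<^sup>T * X))" .
  qed
  have t1: "C\<^sup>T * (Jmat n w * M) = Jmat n w * (M * C\<^sup>T)" for w using TJM[OF M g cm] C M by simp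
  show "C\<^sup>T * Pm M u y = Pm M u y * C\<^sup>T" unfolding Pm_def using C M t t1 by simp
  show "C\<^sup>T * Pm2 M u y = Pm2 M u y * C\<^sup>T" unfolding Pm2_def using C M t t1 by simp
qed

lemma TRm: assumes M: "M \<in> carrier_mat (2*n) (2*n)" and g: "goodJ C" and cm: "C * M = M * C\<^sup>T"
  and d: "det (Dmat n M y e) \<noteq> 0"
  shows "C\<^sup>T * Rm M y e = Rm M y e * C\<^sup>T"
proof -
  have C: "C \<in> carrier_mat (2*n) (2*n)" using g unfolding goodJ_def by auto
  have T: "C\<^sup>T \<in> carrier_mat (2*n) (2*n)" using C by simp
  note R = Rm_props[OF M d]
  define A where "A = Jmat n y * M"
  have A: "A \<in> carrier_mat (2*n) (2*n)" unfolding A_def using M by simp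
  have TA: "C\<^sup>T * A = A * C\<^sup>T" unfolding A_def by (rule TJM[OF M g cm])
  have TQ: "C\<^sup>T * (A * A) = (A * A) * C\<^sup>T"
  proof -
    have "C\<^sup>T * (A * A) = (C\<^sup>T * A) * A" using assoc_mult_mat[OF T A A] by simp
    also have "\<dots> = A * (C\<^sup>T * A)" using TA assoc_mult_mat[OF A T A] by simp
    also have "\<dots> = (A * A) * C\<^sup>T" using TA assoc_mult_mat[OF A A T] by simp
    finally show ?thesis .
  qed
  have D: "Dmat n M y e = 1\<^sub>m (2*n) - (complex_of_real e)^2 \<cdot>\<^sub>m (A * A)" unfolding Dmat_def A_def ..
  have TD: "C\<^sup>T * Dmat n M y e = Dmat n M y e * C\<^sup>T"
  proof -
    have "C\<^sup>T * Dmat n M y e = C\<^sup>T * 1\<^sub>m (2*n) - C\<^sup>T * ((complex_of_real e)^2 \<cdot>\<^sub>m (A * A))"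
      unfolding D by (rule mult_minus_distrib_mat[OF T]) (use A in auto)
    also have "\<dots> = C\<^sup>T - (complex_of_real e)^2 \<cdot>\<^sub>m (C\<^sup>T * (A * A))"
      using T A mult_smult_distrib[OF T, of "A * A" "2*n"] by simp
    also have "\<dots> = C\<^sup>T - (complex_of_real e)^2 \<cdot>\<^sub>m ((A * A) * C\<^sup>T)" using TQ by simp
    also have "\<dots> = 1\<^sub>m (2*n) * C\<^sup>T - ((complex_of_real e)^2 \<cdot>\<^sub>m (A * A)) * C\<^sup>T"
      using T A mult_smult_assoc_mat[of "A * A" "2*n" "2*n" "C\<^sup>T" "2*n"] by simp
    also have "\<dots> = Dmat n M y e * C\<^sup>T"
      unfolding D by (rule minus_mult_distrib_mat[symmetric]) (use A T in auto)
    finally show ?thesis .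
  qed
  define Rr where "Rr = Rm M y e"
  define Dd where "Dd = Dmat n M y e"
  have Rr: "Rr \<in> carrier_mat (2*n) (2*n)" "Dd * Rr = 1\<^sub>m (2*n)" "Rr * Dd = 1\<^sub>m (2*n)"
    and Dd: "Dd \<in> carrier_mat (2*n) (2*n)" using R M unfolding Rr_def Dd_def by auto
  have TD': "C\<^sup>T * Dd = Dd * C\<^sup>T" using TD unfolding Dd_def .
  have "Rr * C\<^sup>T = (Rr * C\<^sup>T) * (Dd * Rr)" using Rr T by simp
  also have "\<dots> = Rr * ((C\<^sup>T * Dd) * Rr)" using Rr T Dd by simp
  also have "\<dots> = Rr * ((Dd * C\<^sup>T) * Rr)" using TD' by simp
  also have "\<dots> = (Rr * Dd) * (C\<^sup>T * Rr)" using Rr(1) T Dd by simp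
  also have "\<dots> = C\<^sup>T * Rr" unfolding Rr(3) using Rr T by (simp add: left_mult_one_mat)
  finally show ?thesis unfolding Rr_def by simp
qed



lemma TPm_vec: assumes M: "M \<in> carrier_mat (2*n) (2*n)" and g: "goodJ C" and cm: "C * M = M * C\<^sup>T"
  and u: "u \<in> carrier_vec (2*n)" and v: "v \<in> carrier_vec (2*n)"
  shows "Pm M (C\<^sup>T *\<^sub>v u) y = C\<^sup>T * Pm M u y"
    "Pm2 M (C\<^sup>T *\<^sub>v u) v = C\<^sup>T * Pm2 M u v"
    "Pm2 M u (C\<^sup>T *\<^sub>v v) = C\<^sup>T * Pm2 M u v"
proof -
  have C: "C \<in> carrier_mat (2*n) (2*n)" using g unfolding goodJ_def by auto
  have T: "C\<^sup>T \<in> carrier_mat (2*n) (2*n)" using C by simp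
  have Ju: "Jmat n (C\<^sup>T *\<^sub>v u) = C\<^sup>T * Jmat n u" and Jv: "Jmat n (C\<^sup>T *\<^sub>v v) = C\<^sup>T * Jmat n v"
    using g u v unfolding goodJ_def by auto
  have sw: "(Jmat n w * M) * (C\<^sup>T * (Jmat n z * M)) = C\<^sup>T * ((Jmat n w * M) * (Jmat n z * M))" for w z
  proof -
    have "(Jmat n w * M) * (C\<^sup>T * (Jmat n z * M)) = ((Jmat n w * M) * C\<^sup>T) * (Jmat n z * M)"
      using assoc_mult_mat[of "Jmat n w * M" "2*n" "2*n" "C\<^sup>T" "2*n" "Jmat n z * M" "2*n"] M T by simp
    also have "\<dots> = (C\<^sup>T * (Jmat n w * M)) * (Jmat n z * M)" using TJM[OF M g cm] by simp
    also have "\<dots> = C\<^sup>T * ((Jmat n w * M) * (Jmat n z * M))"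
      using assoc_mult_mat[of "C\<^sup>T" "2*n" "2*n" "Jmat n w * M" "2*n" "Jmat n z * M" "2*n"] M T by simp
    finally show ?thesis .
  qed
  have sw2: "(C\<^sup>T * (Jmat n w * M)) * (Jmat n z * M) = C\<^sup>T * ((Jmat n w * M) * (Jmat n z * M))" for w z
    using assoc_mult_mat[of "C\<^sup>T" "2*n" "2*n" "Jmat n w * M" "2*n" "Jmat n z * M" "2*n"] M T by simp
  have Jm: "(C\<^sup>T * Jmat n w) * M = C\<^sup>T * (Jmat n w * M)" for w
    using assoc_mult_mat[of "C\<^sup>T" "2*n" "2*n" "Jmat n w" "2*n" M "2*n"] M T by simp
  have dist: "C\<^sup>T * X + C\<^sup>T * Y = C\<^sup>T * (X + Y)" if "X \<in> carrier_mat (2*n) (2*n)" "Y \<in> carrier_mat (2*n) (2*n)" for X Y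
    using mult_add_distrib_mat[OF T that] by simp
  show "Pm M (C\<^sup>T *\<^sub>v u) y = C\<^sup>T * Pm M u y"
    unfolding Pm_def Ju Jm sw sw2 by (rule dist; use M in simp)
  show "Pm2 M (C\<^sup>T *\<^sub>v u) v = C\<^sup>T * Pm2 M u v"
    unfolding Pm2_def Ju Jm sw sw2 by (rule dist; use M in simp)
  show "Pm2 M u (C\<^sup>T *\<^sub>v v) = C\<^sup>T * Pm2 M u v"
    unfolding Pm2_def Jv Jm sw sw2 by (rule dist; use M in simp)
qed


lemma comm_push: assumes T: "T \<in> carrier_mat (2*n) (2*n)" and Z: "Z \<in> carrier_mat (2*n) (2*n)"
  and c: "T * Z = Z * (T :: complex mat)"
  shows "\<And>X. X \<in> carrier_mat (2*n) (2*n) \<Longrightarrow> T * (Z * X) = Z * (T * X)"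
proof -
  fix X :: "complex mat" assume X: "X \<in> carrier_mat (2*n) (2*n)"
  have "T * (Z * X) = (T * Z) * X" using T Z X by simp
  also have "\<dots> = Z * (T * X)" using c T Z X by simp
  finally show "T * (Z * X) = Z * (T * X)" .
qed

lemma TR1: assumes M: "M \<in> carrier_mat (2*n) (2*n)" and g: "goodJ C" and cm: "C * M = M * C\<^sup>T"
  and u: "u \<in> carrier_vec (2*n)" and d: "det (Dmat n M y e) \<noteq> 0"
  shows "R1 M y e (C\<^sup>T *\<^sub>v u) = C\<^sup>T * R1 M y e u" "C\<^sup>T * R1 M y e u = R1 M y e u * C\<^sup>T"
proof -
  have C: "C \<in> carrier_mat (2*n) (2*n)" using g unfolding goodJ_def by auto
  have T: "C\<^sup>T \<in> carrier_mat (2*n) (2*n)" using C by simp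
  have R: "Rm M y e \<in> carrier_mat (2*n) (2*n)" using M d by simp
  have P: "Pm M u y \<in> carrier_mat (2*n) (2*n)" using M by simp
  note TR = TRm[OF M g cm d] and TP = TPm(1)[OF M g cm, of u y]
  note pR = comm_push[OF T R TR] and pP = comm_push[OF T P TP]
  have sm: "C\<^sup>T * (a \<cdot>\<^sub>m X) = a \<cdot>\<^sub>m (C\<^sup>T * X)" if "X \<in> carrier_mat (2*n) (2*n)" for a X
    using T that by simp
  show "R1 M y e (C\<^sup>T *\<^sub>v u) = C\<^sup>T * R1 M y e u" unfolding R1_def TPm_vec(1)[OF M g cm u u]
    using T R P by (simp add: pR pP TR TP)
  show "C\<^sup>T * R1 M y e u = R1 M y e u * C\<^sup>T" unfolding R1_def
    using T R P by (simp add: pR pP TR TP)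
qed


lemma sq_mat_vec_smult[simp]: "A \<in> carrier_mat (2*n) (2*n) \<Longrightarrow> v \<in> carrier_vec (2*n)
  \<Longrightarrow> A *\<^sub>v (c \<cdot>\<^sub>v v) = c \<cdot>\<^sub>v (A *\<^sub>v (v :: complex vec))" by (rule mult_mat_vec)
lemma sq_mat_vec_add[simp]: "A \<in> carrier_mat (2*n) (2*n) \<Longrightarrow> v \<in> carrier_vec (2*n) \<Longrightarrow> w \<in> carrier_vec (2*n)
  \<Longrightarrow> A *\<^sub>v (v + w) = A *\<^sub>v v + A *\<^sub>v (w :: complex vec)" by (rule mult_add_distrib_mat_vec)

lemma comm_push_vec: assumes T: "T \<in> carrier_mat (2*n) (2*n)" and Z: "Z \<in> carrier_mat (2*n) (2*n)"
  and c: "T * Z = Z * (T :: complex mat)"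
  shows "\<And>w. w \<in> carrier_vec (2*n) \<Longrightarrow> T *\<^sub>v (Z *\<^sub>v w) = Z *\<^sub>v (T *\<^sub>v w)"
proof -
  fix w :: "complex vec" assume w: "w \<in> carrier_vec (2*n)"
  have "T *\<^sub>v (Z *\<^sub>v w) = (T * Z) *\<^sub>v w" using T Z w by simp
  also have "\<dots> = Z *\<^sub>v (T *\<^sub>v w)" using c T Z w by simp
  finally show "T *\<^sub>v (Z *\<^sub>v w) = Z *\<^sub>v (T *\<^sub>v w)" .
qed

lemma CM_push: fixes M C :: "complex mat" assumes M: "M \<in> carrier_mat (2*n) (2*n)" and C: "C \<in> carrier_mat (2*n) (2*n)" and cm: "C * M = M * C\<^sup>T"
  shows "\<And>X. X \<in> carrier_mat (2*n) (2*n) \<Longrightarrow> C * (M * X) = M * (C\<^sup>T * X)"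
    "\<And>w. w \<in> carrier_vec (2*n) \<Longrightarrow> C *\<^sub>v (M *\<^sub>v w) = M *\<^sub>v (C\<^sup>T *\<^sub>v w)"
    "\<And>a b. a \<in> carrier_vec (2*n) \<Longrightarrow> b \<in> carrier_vec (2*n) \<Longrightarrow> (C\<^sup>T *\<^sub>v a) \<bullet> b = a \<bullet> (C *\<^sub>v b)"
proof -
  have T: "C\<^sup>T \<in> carrier_mat (2*n) (2*n)" using C by simp
  fix X :: "complex mat" assume X: "X \<in> carrier_mat (2*n) (2*n)"
  have "C * (M * X) = (C * M) * X" using C M X by simp
  thus "C * (M * X) = M * (C\<^sup>T * X)" using cm C M X T by simp
next
  have T: "C\<^sup>T \<in> carrier_mat (2*n) (2*n)" using C by simp
  fix w :: "complex vec" assume w: "w \<in> carrier_vec (2*n)"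
  have "C *\<^sub>v (M *\<^sub>v w) = (C * M) *\<^sub>v w" using C M w by simp
  thus "C *\<^sub>v (M *\<^sub>v w) = M *\<^sub>v (C\<^sup>T *\<^sub>v w)" using cm C M w T by simp
next
  fix a b :: "complex vec" assume "a \<in> carrier_vec (2*n)" "b \<in> carrier_vec (2*n)"
  thus "(C\<^sup>T *\<^sub>v a) \<bullet> b = a \<bullet> (C *\<^sub>v b)" using transpose_vec_mult_scalar[OF C] by blast
qed

lemma grad_ident: assumes M: "M \<in> carrier_mat (2*n) (2*n)" and g: "goodJ C" and cm: "C * M = M * C\<^sup>T"
  and y: "y \<in> carrier_vec (2*n)" and u: "u \<in> carrier_vec (2*n)" and d: "det (Dmat n M y e) \<noteq> 0"
  shows "Lf (C * M) M y e u = Lf M M y e (C\<^sup>T *\<^sub>v u)"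
proof -
  have C: "C \<in> carrier_mat (2*n) (2*n)" using g unfolding goodJ_def by auto
  have T: "C\<^sup>T \<in> carrier_mat (2*n) (2*n)" using C by simp
  have R: "Rm M y e \<in> carrier_mat (2*n) (2*n)" using M d by simp
  have R1: "R1 M y e u \<in> carrier_mat (2*n) (2*n)" using M d by simp
  note TR = TRm[OF M g cm d] and TR1 = TR1[OF M g cm u d]
  note p1 = comm_push[OF T R TR] comm_push_vec[OF T R TR] and p2 = comm_push[OF T R1 TR1(2)] comm_push_vec[OF T R1 TR1(2)]
  note cp = CM_push[OF M C cm]
  show ?thesis unfolding Lf_def TR1(1) using M C T R R1 y u
    by (simp add: p1 p2 cp TR TR1(2))
qed


lemma hess_ident: assumes M: "M \<in> carrier_mat (2*n) (2*n)" and g: "goodJ C" and cm: "C * M = M * C\<^sup>T"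
  and y: "y \<in> carrier_vec (2*n)" and u: "u \<in> carrier_vec (2*n)" and v: "v \<in> carrier_vec (2*n)"
  and d: "det (Dmat n M y e) \<noteq> 0"
  shows "Wf M y e (C\<^sup>T *\<^sub>v u) v = Wf M y e u (C\<^sup>T *\<^sub>v v)"
proof -
  have C: "C \<in> carrier_mat (2*n) (2*n)" using g unfolding goodJ_def by auto
  have T: "C\<^sup>T \<in> carrier_mat (2*n) (2*n)" using C by simp
  have R: "Rm M y e \<in> carrier_mat (2*n) (2*n)" using M d by simp
  have R1u: "R1 M y e u \<in> carrier_mat (2*n) (2*n)" and R1v: "R1 M y e v \<in> carrier_mat (2*n) (2*n)" using M d by simp_all
  have Pv: "Pm M v y \<in> carrier_mat (2*n) (2*n)" and P2: "Pm2 M u v \<in> carrier_mat (2*n) (2*n)" using M by simp_all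
  note TR = TRm[OF M g cm d] and TRu = TR1[OF M g cm u d] and TRv = TR1[OF M g cm v d]
  note TPv = TPm(1)[OF M g cm, of v y] and TP2 = TPm(2)[OF M g cm, of u v]
  note p1 = comm_push[OF T R TR] comm_push_vec[OF T R TR]
  note p2 = comm_push[OF T R1u TRu(2)] comm_push_vec[OF T R1u TRu(2)]
  note p3 = comm_push[OF T R1v TRv(2)] comm_push_vec[OF T R1v TRv(2)]
  note p4 = comm_push[OF T Pv TPv] comm_push_vec[OF T Pv TPv]
  note p5 = comm_push[OF T P2 TP2] comm_push_vec[OF T P2 TP2]
  note cp = CM_push[OF M C cm]
  note defs = TRu(1) TRv(1) TPm_vec(1)[OF M g cm v v, of y] TPm_vec(2)[OF M g cm u v] TPm_vec(3)[OF M g cm u v]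
  show ?thesis unfolding Wf_def defs using M C T R R1u R1v Pv P2 y u v
    by (simp add: p1 p2 p3 p4 p5 cp TR TRu(2) TRv(2) TPv TP2 algebra_simps)
qed


section \<open>Linearity of the first derivative in the direction\<close>

lemma Jmat_add: assumes n: "0 < n" and a: "a \<in> carrier_vec (2*n)" and b: "b \<in> carrier_vec (2*n)"
  shows "Jmat n (a + b) = Jmat n a + Jmat n b"
proof (rule eq_matI)
  fix i j assume "i < dim_row (Jmat n a + Jmat n b)" "j < dim_col (Jmat n a + Jmat n b)"
  hence ij: "i < 2*n" "j < 2*n" by auto
  show "Jmat n (a + b) $$ (i, j) = (Jmat n a + Jmat n b) $$ (i, j)"
    using ij a b n by (auto simp: Jmat_index mod_lt2)
qed auto

lemma Jmat_smult: assumes n: "0 < n" and a: "a \<in> carrier_vec (2*n)"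
  shows "Jmat n (c \<cdot>\<^sub>v a) = c \<cdot>\<^sub>m Jmat n a"
proof (rule eq_matI)
  fix i j assume "i < dim_row (c \<cdot>\<^sub>m Jmat n a)" "j < dim_col (c \<cdot>\<^sub>m Jmat n a)"
  hence ij: "i < 2*n" "j < 2*n" by auto
  show "Jmat n (c \<cdot>\<^sub>v a) $$ (i, j) = (c \<cdot>\<^sub>m Jmat n a) $$ (i, j)"
    using ij a n by (auto simp: Jmat_index mod_lt2)
qed auto

lemma sq_add_scal[simp]: "u \<in> carrier_vec (2*n) \<Longrightarrow> v \<in> carrier_vec (2*n) \<Longrightarrow> w \<in> carrier_vec (2*n)
  \<Longrightarrow> (u + v) \<bullet> w = u \<bullet> w + v \<bullet> (w :: complex vec)" by (rule add_scalar_prod_distrib)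
lemma sq_smult_scal[simp]: "u \<in> carrier_vec (2*n) \<Longrightarrow> v \<in> carrier_vec (2*n)
  \<Longrightarrow> (c \<cdot>\<^sub>v u) \<bullet> v = c * (u \<bullet> (v :: complex vec))" by (rule smult_scalar_prod_distrib)

lemma sq_add_assoc[simp]: "A \<in> carrier_mat (2*n) (2*n) \<Longrightarrow> B \<in> carrier_mat (2*n) (2*n) \<Longrightarrow> C \<in> carrier_mat (2*n) (2*n)
  \<Longrightarrow> (A + B) + C = A + (B + (C :: complex mat))" by (rule assoc_add_mat)
lemma sq_add_comm: "A \<in> carrier_mat (2*n) (2*n) \<Longrightarrow> B \<in> carrier_mat (2*n) (2*n)
  \<Longrightarrow> A + B = B + (A :: complex mat)" by (rule comm_add_mat)
lemma sq_add_lcomm: "A \<in> carrier_mat (2*n) (2*n) \<Longrightarrow> B \<in> carrier_mat (2*n) (2*n) \<Longrightarrow> C \<in> carrier_mat (2*n) (2*n)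
  \<Longrightarrow> A + (B + C) = B + (A + (C :: complex mat))"
  by (metis assoc_add_mat comm_add_mat)

lemma smult_smult_mat: "a \<cdot>\<^sub>m (b \<cdot>\<^sub>m A) = (a * b :: complex) \<cdot>\<^sub>m A"
  by (intro eq_matI) auto

lemma Lf_add: assumes M: "M \<in> carrier_mat (2*n) (2*n)" and n: "0 < n" and y: "y \<in> carrier_vec (2*n)"
  and a: "a \<in> carrier_vec (2*n)" and b: "b \<in> carrier_vec (2*n)" and d: "det (Dmat n M y e) \<noteq> 0"
  shows "Lf M M y e (a + b) = Lf M M y e a + Lf M M y e b"
proof -
  have R: "Rm M y e \<in> carrier_mat (2*n) (2*n)" using M d by simp
  have "Pm M (a + b) y = Pm M a y + Pm M b y" unfolding Pm_def Jmat_add[OF n a b] using M by (simp add: sq_add_comm sq_add_lcomm)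
  hence "R1 M y e (a + b) = R1 M y e a + R1 M y e b"
    unfolding R1_def using R M by (simp add: add_smult_distrib_left_mat[of _ "2*n" "2*n"])
  thus ?thesis unfolding Lf_def using R M y a b d by (simp add: add_ac)
qed

lemma Lf_smult: assumes M: "M \<in> carrier_mat (2*n) (2*n)" and n: "0 < n" and y: "y \<in> carrier_vec (2*n)"
  and a: "a \<in> carrier_vec (2*n)" and d: "det (Dmat n M y e) \<noteq> 0"
  shows "Lf M M y e (c \<cdot>\<^sub>v a) = c * Lf M M y e a"
proof -
  have R: "Rm M y e \<in> carrier_mat (2*n) (2*n)" using M d by simp
  have e1: "c \<cdot>\<^sub>m X = X * (c \<cdot>\<^sub>m 1\<^sub>m (2*n))" if "X \<in> carrier_mat (2*n) (2*n)" for X :: "complex mat"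
    using that by (intro eq_matI) (auto simp: scalar_prod_def)
  have "Pm M (c \<cdot>\<^sub>v a) y = c \<cdot>\<^sub>m Pm M a y" unfolding Pm_def Jmat_smult[OF n a] using M
    by (simp add: add_smult_distrib_left_mat[of _ "2*n" "2*n"] mult_smult_distrib[of _ "2*n" "2*n"] mult_smult_assoc_mat[of _ "2*n" "2*n"])
  hence "R1 M y e (c \<cdot>\<^sub>v a) = c \<cdot>\<^sub>m R1 M y e a"
    unfolding R1_def using R M by (simp add: smult_smult_mat mult.commute[of c])
  thus ?thesis unfolding Lf_def using R M y a d by (simp add: distrib_left)
qed


lemma Lf_lin: assumes M: "M \<in> carrier_mat (2*n) (2*n)" and n: "0 < n" and y: "y \<in> carrier_vec (2*n)"
  and u: "u \<in> carrier_vec (2*n)" and d: "det (Dmat n M y e) \<noteq> 0"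
  shows "Lf M M y e u = (\<Sum>k<2*n. u $ k * Lf M M y e (unit_vec (2*n) k))"
proof -
  define pv where "pv m = vec (2*n) (\<lambda>i. if i < m then u $ i else 0)" for m
  have pvc: "pv m \<in> carrier_vec (2*n)" for m unfolding pv_def by simp
  have "m \<le> 2*n \<Longrightarrow> Lf M M y e (pv m) = (\<Sum>k<m. u $ k * Lf M M y e (unit_vec (2*n) k))" for m
  proof (induction m)
    case 0
    have "pv 0 = 0 \<cdot>\<^sub>v 0\<^sub>v (2*n)" unfolding pv_def by (intro eq_vecI) auto
    thus ?case using Lf_smult[OF M n y _ d, of "0\<^sub>v (2*n)" 0] by simp
  next
    case (Suc m)
    have e: "pv (Suc m) = pv m + u $ m \<cdot>\<^sub>v unit_vec (2*n) m" unfolding pv_def using Suc.prems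
      by (intro eq_vecI) (auto simp: unit_vec_def less_Suc_eq)
    show ?case unfolding e using Suc Lf_add[OF M n y pvc _ d] Lf_smult[OF M n y _ d] by simp
  qed
  moreover have "pv (2*n) = u" unfolding pv_def using u by (intro eq_vecI) auto
  ultimately show ?thesis by (metis order_refl)
qed


section \<open>Gradient and Hessian formulas\<close>

lemma cderiv_eq: "(f has_field_derivative D) (at z) \<Longrightarrow> cderiv f z = D"
  unfolding cderiv_def by (rule some_equality) (auto intro: DERIV_unique)

lemma unitT: fixes C :: "complex mat" assumes C: "C \<in> carrier_mat (2*n) (2*n)" and j: "j < 2*n" and k: "k < 2*n"
  shows "(C\<^sup>T *\<^sub>v unit_vec (2*n) j) $ k = C $$ (j,k)"
proof -
  have "(C\<^sup>T *\<^sub>v unit_vec (2*n) j) $ k = (\<Sum>i\<in>{0..<2*n}. C $$ (i,k) * (if i = j then 1 else 0))"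
    using C j k by (simp add: scalar_prod_def unit_vec_def)
  also have "\<dots> = (\<Sum>i\<in>{0..<2*n}. if i = j then C $$ (i,k) else 0)" by (rule sum.cong) auto
  also have "\<dots> = C $$ (j,k)" using j by (rule sum_single)
  finally show ?thesis .
qed

lemma At_unit: assumes n: "0 < n" and i: "i < 2*n"
  shows "(Amat n)\<^sup>T *\<^sub>v unit_vec (2*n) i = unit_vec (2*n) (sg n i)"
proof (rule eq_vecI)
  fix k assume "k < dim_vec (unit_vec (2*n) (sg n i))"
  hence k: "k < 2*n" by simp
  have "((Amat n)\<^sup>T *\<^sub>v unit_vec (2*n) i) $ k = unit_vec (2*n) i $ tu n k"
    by (rule mult_At_vec[OF n _ k]) simp
  also have "\<dots> = unit_vec (2*n) (sg n i) $ k" using tu_lt[OF n k] k sg_tu[OF n i k]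
    by (auto simp: unit_vec_def)
  finally show "((Amat n)\<^sup>T *\<^sub>v unit_vec (2*n) i) $ k = unit_vec (2*n) (sg n i) $ k" .
qed simp

lemma grad_F: assumes M: "M \<in> carrier_mat (2*n) (2*n)" and X: "X \<in> carrier_mat (2*n) (2*n)"
  and x: "x \<in> carrier_vec (2*n)" and n: "0 < n" and d: "det (Dmat n M x e) \<noteq> 0"
  shows "grad n (\<lambda>y. y \<bullet> ((X * minv (Dmat n M y e)) *\<^sub>v y)) x = vec (2*n) (\<lambda>j. Lf X M x e (unit_vec (2*n) j))"
  unfolding grad_def
  by (intro eq_vecI) (auto intro!: cderiv_eq F_deriv[OF M X x _ n d])

lemma det_ev: assumes M: "M \<in> carrier_mat (2*n) (2*n)" and x: "x \<in> carrier_vec (2*n)"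
  and u: "u \<in> carrier_vec (2*n)" and n: "0 < n" and d: "det (Dmat n M x e) \<noteq> 0"
  shows "\<forall>\<^sub>F s in nhds 0. det (Dmat n M (x + s \<cdot>\<^sub>v u) e) \<noteq> 0"
proof -
  note D = mhd_Dline[OF M x u n, of e]
  have "dif (\<lambda>s. det (Dmat n M (x + s \<cdot>\<^sub>v u) e))"
    by (rule dif_det[OF mhd_ev[OF D]]) (rule mhd_dif[OF D])
  from dif_ev_ne[OF this] show ?thesis using d x u by simp
qed

lemma hess_F: assumes M: "M \<in> carrier_mat (2*n) (2*n)"
  and x: "x \<in> carrier_vec (2*n)" and n: "0 < n" and d: "det (Dmat n M x e) \<noteq> 0"
  shows "hess n (\<lambda>y. modH n M y e) x = mat (2*n) (2*n) (\<lambda>(i,j). Wf M x e (unit_vec (2*n) i) (unit_vec (2*n) j))"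
proof (rule eq_matI)
  fix i j assume ij: "i < dim_row (mat (2*n) (2*n) (\<lambda>(i,j). Wf M x e (unit_vec (2*n) i) (unit_vec (2*n) j)))"
    "j < dim_col (mat (2*n) (2*n) (\<lambda>(i,j). Wf M x e (unit_vec (2*n) i) (unit_vec (2*n) j)))"
  hence ij: "i < 2*n" "j < 2*n" by auto
  let ?ei = "unit_vec (2*n) i" and ?ej = "unit_vec (2*n) j"
  have ev: "\<forall>\<^sub>F s in nhds 0. grad n (\<lambda>y. modH n M y e) (x + s \<cdot>\<^sub>v ?ei) $ j = Lf M M (x + s \<cdot>\<^sub>v ?ei) e ?ej"
    using det_ev[OF M x unit_vec_carrier[of "2*n" i] n d]
  proof eventually_elim
    case (elim s)
    have xs: "x + s \<cdot>\<^sub>v ?ei \<in> carrier_vec (2*n)" using x by simp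
    show ?case unfolding modH_def grad_F[OF M M xs n elim] using ij by simp
  qed
  have "((\<lambda>s. grad n (\<lambda>y. modH n M y e) (x + s \<cdot>\<^sub>v ?ei) $ j) has_field_derivative Wf M x e ?ei ?ej) (at 0)"
    using Lf_deriv[OF M x _ _ n d, of ?ei ?ej] ev DERIV_cong_ev[of 0 0] by fastforce
  thus "hess n (\<lambda>y. modH n M y e) x $$ (i, j) = mat (2*n) (2*n) (\<lambda>(i,j). Wf M x e (unit_vec (2*n) i) (unit_vec (2*n) j)) $$ (i, j)"
    unfolding hess_def using ij by (simp add: cderiv_eq)
qed (auto simp: hess_def)

lemma hess_A: assumes M: "M \<in> carrier_mat (2*n) (2*n)" and cm: "Amat n * M = M * (Amat n)\<^sup>T"
  and x: "x \<in> carrier_vec (2*n)" and n: "0 < n" and d: "det (Dmat n M x e) \<noteq> 0"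
  shows "Amat n * hess n (\<lambda>y. modH n M y e) x = hess n (\<lambda>y. modH n M y e) x * (Amat n)\<^sup>T"
proof -
  let ?W = "mat (2*n) (2*n) (\<lambda>(i,j). Wf M x e (unit_vec (2*n) i) (unit_vec (2*n) j))"
  have W: "?W \<in> carrier_mat (2*n) (2*n)" by simp
  have "Amat n * ?W = ?W * (Amat n)\<^sup>T"
  proof (rule eq_matI)
    fix i j assume "i < dim_row (?W * (Amat n)\<^sup>T)" "j < dim_col (?W * (Amat n)\<^sup>T)"
    hence ij: "i < 2*n" "j < 2*n" by auto
    have "(Amat n * ?W) $$ (i,j) = ?W $$ (sg n i, j)" by (rule mult_A_left[OF n W ij])
    also have "\<dots> = Wf M x e ((Amat n)\<^sup>T *\<^sub>v unit_vec (2*n) i) (unit_vec (2*n) j)"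
      using sg_lt[OF n ij(1)] ij At_unit[OF n ij(1)] by simp
    also have "\<dots> = Wf M x e (unit_vec (2*n) i) ((Amat n)\<^sup>T *\<^sub>v unit_vec (2*n) j)"
      by (rule hess_ident[OF M goodJ_A[OF n] cm x _ _ d]) simp_all
    also have "\<dots> = ?W $$ (i, sg n j)" using sg_lt[OF n ij(2)] ij At_unit[OF n ij(2)] by simp
    also have "\<dots> = (?W * (Amat n)\<^sup>T) $$ (i,j)" by (rule mult_At_right[OF n W ij, symmetric])
    finally show "(Amat n * ?W) $$ (i,j) = (?W * (Amat n)\<^sup>T) $$ (i,j)" .
  qed auto
  thus ?thesis unfolding hess_F[OF M x n d] .
qed


lemma Dmat_BH: assumes M: "M \<in> carrier_mat (2*n) (2*n)" and g: "goodJ B" and cm: "B * M = M * B\<^sup>T"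
  and BB: "B * B = 1\<^sub>m (2*n)"
  shows "Dmat n (B * M) y e = Dmat n M y e"
proof -
  have B: "B \<in> carrier_mat (2*n) (2*n)" using g unfolding goodJ_def by auto
  have T: "B\<^sup>T \<in> carrier_mat (2*n) (2*n)" using B by simp
  have JB: "Jmat n y * B = B\<^sup>T * Jmat n y" using g unfolding goodJ_def by auto
  have TT: "B\<^sup>T * B\<^sup>T = 1\<^sub>m (2*n)" using sq_trans_mult[OF B B] BB by simp
  have TJ: "B\<^sup>T * (Jmat n y * M) = (Jmat n y * M) * B\<^sup>T" by (rule TJM[OF M g cm])
  have e1: "Jmat n y * (B * M) = B\<^sup>T * (Jmat n y * M)"
  proof -
    have "Jmat n y * (B * M) = (Jmat n y * B) * M" using B M by simp
    also have "\<dots> = B\<^sup>T * (Jmat n y * M)" unfolding JB using B M by simp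
    finally show ?thesis .
  qed
  have "(Jmat n y * (B * M)) * (Jmat n y * (B * M)) = (Jmat n y * M) * (Jmat n y * M)"
  proof -
    have "(Jmat n y * (B * M)) * (Jmat n y * (B * M)) = (B\<^sup>T * (Jmat n y * M)) * (B\<^sup>T * (Jmat n y * M))"
      unfolding e1 ..
    also have "\<dots> = B\<^sup>T * ((Jmat n y * M) * B\<^sup>T) * (Jmat n y * M)" using T M by simp
    also have "\<dots> = B\<^sup>T * (B\<^sup>T * (Jmat n y * M)) * (Jmat n y * M)" unfolding TJ ..
    also have "\<dots> = (B\<^sup>T * B\<^sup>T) * ((Jmat n y * M) * (Jmat n y * M))" using T M by simp
    also have "\<dots> = (Jmat n y * M) * (Jmat n y * M)" unfolding TT using M by (simp add: left_mult_one_mat)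
    finally show ?thesis .
  qed
  thus ?thesis unfolding Dmat_def by simp
qed

end

lemma BH_facts: assumes n: "0 < n" and M: "M \<in> carrier_mat (2*n) (2*n)"
  and cm: "Amat n * M = M * (Amat n)\<^sup>T"
  shows "goodJ n (Bmat n \<alpha>)" "Bmat n \<alpha> * M = M * (Bmat n \<alpha>)\<^sup>T" "Amat n * Bmat n \<alpha> = Bmat n \<alpha> * Amat n"
proof -
  have Ak: "\<And>k. Amat n ^\<^sub>m k \<in> carrier_mat (2*n) (2*n)" by simp
  show "goodJ n (Bmat n \<alpha>)" unfolding Bmat_msum by (rule goodJ_msum[OF n goodJ_pow[OF goodJ_A[OF n]]])
  show "Bmat n \<alpha> * M = M * (Bmat n \<alpha>)\<^sup>T" unfolding Bmat_msum
    by (rule Mcomm_msum[OF Ak M Mcomm_pow[OF Amat_carrier M cm]])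
  show "Amat n * Bmat n \<alpha> = Bmat n \<alpha> * Amat n" unfolding Bmat_msum
    by (rule msum_comm[OF Ak Amat_carrier pow_commute[OF Amat_carrier], symmetric])
qed

theorem mainTheorem4:
  fixes n :: nat and Hr :: "real mat" and \<alpha> :: "nat \<Rightarrow> complex"
    and x :: "complex vec" and \<epsilon> :: real
  assumes n2: "n \<ge> 2"
    and adm: "admissible n Hr"
    and B_sq: "Bmat n \<alpha> * Bmat n \<alpha> = 1\<^sub>m (2*n)"
    and x_dim: "x \<in> carrier_vec (2*n)"
  shows
    "let B = Bmat n \<alpha>;
         HH = map_mat complex_of_real Hr;
         KK = B * HH;
         Ht = (\<lambda>y. modH n HH y \<epsilon>);
         Kt = (\<lambda>y. modH n KK y \<epsilon>)
     in (det (Dmat n HH x \<epsilon>) \<noteq> 0 \<and> det (Dmat n KK x \<epsilon>) \<noteq> 0 \<longrightarrow>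
           grad n Kt x = B *\<^sub>v grad n Ht x)
      \<and> (det (Dmat n HH x \<epsilon>) \<noteq> 0 \<longrightarrow>
           Amat n * hess n Ht x = hess n Ht x * (Amat n)\<^sup>T)
      \<and> (det (Dmat n KK x \<epsilon>) \<noteq> 0 \<longrightarrow>
           Amat n * hess n Kt x = hess n Kt x * (Amat n)\<^sup>T)"
proof -
  have n: "0 < n" using n2 by simp
  define B where "B = Bmat n \<alpha>"
  define HH where "HH = map_mat complex_of_real Hr"
  have HH: "HH \<in> carrier_mat (2*n) (2*n)" using adm unfolding admissible_def HH_def by auto
  have AH: "Amat n * HH = HH * (Amat n)\<^sup>T" using adm unfolding admissible_def HH_def by auto
  note BF = BH_facts[OF n HH AH, of \<alpha>, folded B_def]
  have B: "B \<in> carrier_mat (2*n) (2*n)" using BF(1) unfolding goodJ_def by auto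
  have BB: "B * B = 1\<^sub>m (2*n)" using B_sq unfolding B_def .
  define KK where "KK = B * HH"
  have KK: "KK \<in> carrier_mat (2*n) (2*n)" unfolding KK_def using B HH by simp
  have AK: "Amat n * KK = KK * (Amat n)\<^sup>T"
  proof -
    have "Amat n * KK = (Amat n * B) * HH" unfolding KK_def using B HH by (simp add: assoc_mult_mat[of _ "2*n" "2*n"])
    also have "\<dots> = B * (Amat n * HH)" unfolding BF(3) using B HH by (simp add: assoc_mult_mat[of _ "2*n" "2*n"])
    also have "\<dots> = KK * (Amat n)\<^sup>T" unfolding AH KK_def using B HH by (simp add: assoc_mult_mat[of _ "2*n" "2*n"])
    finally show ?thesis .
  qed
  have DK: "\<And>y. Dmat n KK y \<epsilon> = Dmat n HH y \<epsilon>" unfolding KK_def by (rule Dmat_BH[OF HH BF(1) BF(2) BB])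
  have part1: "grad n (\<lambda>y. modH n KK y \<epsilon>) x = B *\<^sub>v grad n (\<lambda>y. modH n HH y \<epsilon>) x"
    if d: "det (Dmat n HH x \<epsilon>) \<noteq> 0"
  proof -
    have gK: "grad n (\<lambda>y. modH n KK y \<epsilon>) x = vec (2*n) (\<lambda>j. Lf n KK HH x \<epsilon> (unit_vec (2*n) j))"
      unfolding modH_def DK by (rule grad_F[OF HH KK x_dim n d])
    have gH: "grad n (\<lambda>y. modH n HH y \<epsilon>) x = vec (2*n) (\<lambda>j. Lf n HH HH x \<epsilon> (unit_vec (2*n) j))"
      unfolding modH_def by (rule grad_F[OF HH HH x_dim n d])
    show ?thesis unfolding gK gH
    proof (rule eq_vecI)
      fix j assume "j < dim_vec (B *\<^sub>v vec (2*n) (\<lambda>j. Lf n HH HH x \<epsilon> (unit_vec (2*n) j)))"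
      hence j: "j < 2*n" using B by simp
      have "Lf n KK HH x \<epsilon> (unit_vec (2*n) j) = Lf n HH HH x \<epsilon> (B\<^sup>T *\<^sub>v unit_vec (2*n) j)"
        unfolding KK_def by (rule grad_ident[OF HH BF(1) BF(2) x_dim unit_vec_carrier d])
      also have "\<dots> = (\<Sum>k<2*n. (B\<^sup>T *\<^sub>v unit_vec (2*n) j) $ k * Lf n HH HH x \<epsilon> (unit_vec (2*n) k))"
        by (rule Lf_lin[OF HH n x_dim _ d]) (use B in simp)
      also have "\<dots> = (\<Sum>k<2*n. B $$ (j,k) * Lf n HH HH x \<epsilon> (unit_vec (2*n) k))"
        by (rule sum.cong) (use unitT[OF B j] in auto)
      also have "\<dots> = (B *\<^sub>v vec (2*n) (\<lambda>j. Lf n HH HH x \<epsilon> (unit_vec (2*n) j))) $ j"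
        using B j by (simp add: scalar_prod_def atLeast0LessThan)
      finally show "vec (2*n) (\<lambda>j. Lf n KK HH x \<epsilon> (unit_vec (2*n) j)) $ j = (B *\<^sub>v vec (2*n) (\<lambda>j. Lf n HH HH x \<epsilon> (unit_vec (2*n) j))) $ j"
        using j by simp
    qed (use B in simp)
  qed
  show ?thesis unfolding Let_def B_def[symmetric] HH_def[symmetric] KK_def[symmetric]
    using part1 hess_A[OF HH AH x_dim n] hess_A[OF KK AK x_dim n] by blast
qed

end
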